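(* Let $\mathbb{K}$ be algebraically closed of characteristic zero, $T$ a torus and $V=\bigoplus_{i=1}^nV_i$ a $T$-module with $V_i\cong\mathbb K$ of weight $s_i\in X^*(T)$. Then $(T,V)$ is visible if and only if there is a partition $\{1,\dots,n\}=\bigsqcup_{j=0}^l I_j$ (with $l\ge0$, $I_0$ possibly empty) such that: (i) $\langle s_i\mid 1\le i\le n\rangle=\bigoplus_{j=0}^l\langle s_i\mid i\in I_j\rangle$; (ii) $\dim\langle s_i\mid i\in I_0\rangle=\#I_0$ and $\dim\langle s_i\mid i\in I_j\rangle=\#I_j-1$ for $j\ge1$; (iii) $0\in CH^{\circ}(\{s_i\mid i\in I_j\})$ for every $j\ge1$.
   Context: $(T,V)$ is visible if $V$ contains finitely many nilpotent $T$-orbits ($x$ nilpotent means $0\in\overline{T\cdot x}$). Spans $\langle\cdot\rangle$ are taken in $X^*(T)\otimes_{\mathbb Z}\mathbb Q$. $CH^{\circ}(A)$ is the set of convex combinations $\sum_{a\in A}\alpha_aa$ with all $\alpha_a>0$. *)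

theory Defs
  imports "HOL-Analysis.Analysis" "HOL-Computational_Algebra.Polynomial"
begin

text \<open>Torus T = (K^*)^r of rank r = CARD('r); characters X^*(T) = Z^r, the character
  s acting by t^s = prod_k (t_k)^(s_k).\<close>

definition torus :: "('a::field ^ 'r) set" where
  "torus = {t. \<forall>k. t $ k \<noteq> 0}"

definition char_eval :: "int ^ 'r \<Rightarrow> 'a::field ^ 'r \<Rightarrow> 'a" where
  "char_eval s t = (\<Prod>k\<in>UNIV. (t $ k) powi (s $ k))"

definition tact :: "('n \<Rightarrow> int ^ 'r) \<Rightarrow> 'a::field ^ 'r \<Rightarrow> 'a ^ 'n \<Rightarrow> 'a ^ 'n" where
  "tact s t x = (\<chi> i. char_eval (s i) t * x $ i)"

definition orbit :: "('n \<Rightarrow> int ^ 'r) \<Rightarrow> 'a::field ^ 'n \<Rightarrow> ('a ^ 'n) set" where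
  "orbit s x = (\<lambda>t. tact s t x) ` (torus :: ('a ^ 'r) set)"

inductive_set polyfun :: "('a::field ^ 'n \<Rightarrow> 'a) set" where
  pf_const: "(\<lambda>v. c) \<in> polyfun"
| pf_coord: "(\<lambda>v. v $ i) \<in> polyfun"
| pf_add: "p \<in> polyfun \<Longrightarrow> q \<in> polyfun \<Longrightarrow> (\<lambda>v. p v + q v) \<in> polyfun"
| pf_mult: "p \<in> polyfun \<Longrightarrow> q \<in> polyfun \<Longrightarrow> (\<lambda>v. p v * q v) \<in> polyfun"

definition zariski_closure :: "('a::field ^ 'n) set \<Rightarrow> ('a ^ 'n) set" where
  "zariski_closure S = {y. \<forall>p\<in>polyfun. (\<forall>x\<in>S. p x = 0) \<longrightarrow> p y = 0}"

definition nilpotent_vec :: "('n \<Rightarrow> int ^ 'r) \<Rightarrow> 'a::field ^ 'n \<Rightarrow> bool" where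
  "nilpotent_vec s x \<longleftrightarrow> 0 \<in> zariski_closure (orbit s x :: ('a ^ 'n) set)"

definition visible :: "'a::field itself \<Rightarrow> ('n::finite \<Rightarrow> int ^ 'r) \<Rightarrow> bool" where
  "visible (_::'a itself) s \<longleftrightarrow>
     finite {orbit s x | x :: 'a ^ 'n. nilpotent_vec s x}"

text \<open>X^*(T) \<otimes> Q = Q^r.\<close>

definition wt :: "int ^ 'r \<Rightarrow> rat ^ 'r" where
  "wt s = (\<chi> k. of_int (s $ k))"

definition is_direct_sum :: "(rat ^ 'r) set \<Rightarrow> nat set \<Rightarrow> (nat \<Rightarrow> (rat ^ 'r) set) \<Rightarrow> bool" where
  "is_direct_sum U J W \<longleftrightarrow>
     (\<forall>j\<in>J. vec.subspace (W j)) \<and> U = vec.span (\<Union>j\<in>J. W j) \<and>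
     (\<forall>w. (\<forall>j\<in>J. w j \<in> W j) \<longrightarrow> (\<Sum>j\<in>J. w j) = 0 \<longrightarrow> (\<forall>j\<in>J. w j = 0))"

definition open_convex_hull :: "(rat ^ 'r) set \<Rightarrow> (rat ^ 'r) set" where
  "open_convex_hull A = {(\<Sum>a\<in>A. c a *s a) | c. (\<forall>a\<in>A. c a > 0) \<and> (\<Sum>a\<in>A. c a) = 1}"

end

theory Submission
  imports Defs
begin


definition dotq :: "rat^'r \<Rightarrow> rat^'r \<Rightarrow> rat" where
  "dotq x y = (\<Sum>k\<in>UNIV. x$k * y$k)"

lemma dotq_commute: "dotq x y = dotq y x"
  unfolding dotq_def by (simp add: mult.commute)

lemma dotq_add_right: "dotq x (y + z) = dotq x y + dotq x z"
  unfolding dotq_def by (simp add: algebra_simps sum.distrib)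

lemma dotq_diff_right: "dotq x (y - z) = dotq x y - dotq x z"
  unfolding dotq_def by (simp add: algebra_simps sum_subtractf)

lemma dotq_scale_right: "dotq x (c *s y) = c * dotq x y"
  unfolding dotq_def by (simp add: algebra_simps sum_distrib_left)

lemma dotq_zero_right[simp]: "dotq x 0 = 0"
  unfolding dotq_def by simp

lemma dotq_sum_right: "dotq x (\<Sum>i\<in>A. f i) = (\<Sum>i\<in>A. dotq x (f i))"
  by (induction A rule: infinite_finite_induct) (auto simp: dotq_add_right)

lemma dotq_add_left: "dotq (y + z) x = dotq y x + dotq z x"
  using dotq_add_right dotq_commute by metis

lemma dotq_diff_left: "dotq (y - z) x = dotq y x - dotq z x"
  using dotq_diff_right dotq_commute by metis

lemma dotq_scale_left: "dotq (c *s y) x = c * dotq y x"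
  using dotq_scale_right dotq_commute by metis

lemma dotq_self_pos: "u \<noteq> 0 \<Longrightarrow> 0 < dotq u u"
proof -
  assume "u \<noteq> 0"
  then obtain k where "u$k \<noteq> 0" by (metis vec_eq_iff zero_index)
  then have "0 < u$k * u$k" by (metis linorder_neqE_linordered_idom mult_neg_neg mult_pos_pos)
  then show ?thesis unfolding dotq_def
    by (intro sum_pos2[where i=k]) auto
qed

lemma small_t:
  fixes \<alpha> \<beta> :: "'i \<Rightarrow> rat"
  assumes "finite S" "\<forall>i\<in>S. 0 < \<alpha> i"
  shows "\<exists>t>0. \<forall>i\<in>S. 0 < \<alpha> i + t * \<beta> i"
  using assms
proof (induction S rule: finite_induct)
  case empty
  then show ?case by (intro exI[of _ 1]) auto
next
  case (insert j S)
  then obtain t0 where t0: "t0 > 0" "\<forall>i\<in>S. 0 < \<alpha> i + t0 * \<beta> i" by auto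
  define t where "t = min t0 (\<alpha> j / (\<bar>\<beta> j\<bar> + 1))"
  have aj: "\<alpha> j > 0" using insert by auto
  have tpos: "t > 0" unfolding t_def using t0 aj by (simp add: add_pos_nonneg)
  have "0 < \<alpha> i + t * \<beta> i" if "i \<in> S" for i
  proof (cases "\<beta> i \<ge> 0")
    case True then show ?thesis using insert that tpos by (simp add: add_pos_nonneg)
  next
    case False
    have "t \<le> t0" unfolding t_def by simp
    then have "t0 * \<beta> i \<le> t * \<beta> i" using False by (simp add: mult_right_mono_neg)
    moreover have "0 < \<alpha> i + t0 * \<beta> i" using t0 that by blast
    ultimately show ?thesis by linarith
  qed
  moreover have "0 < \<alpha> j + t * \<beta> j"
  proof -
    have "t \<le> \<alpha> j / (\<bar>\<beta> j\<bar> + 1)" unfolding t_def by simp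
    then have "t * (\<bar>\<beta> j\<bar> + 1) \<le> \<alpha> j"
      using tpos by (simp add: pos_le_divide_eq[symmetric] add_pos_nonneg)
    moreover have "t * (- \<bar>\<beta> j\<bar>) \<le> t * \<beta> j" using tpos
      by (intro mult_left_mono) auto
    ultimately show ?thesis using tpos by (simp add: algebra_simps)
  qed
  ultimately show ?case using tpos by auto
qed

lemma gordan:
  fixes v :: "'i \<Rightarrow> rat^'r"
  assumes "finite S"
  shows "(\<exists>l. \<forall>i\<in>S. 0 < dotq l (v i)) \<or>
         (\<exists>a. (\<forall>i\<in>S. 0 \<le> a i) \<and> (\<exists>i\<in>S. a i \<noteq> 0) \<and> (\<Sum>i\<in>S. a i *s v i) = 0)"
  using assms
proof (induction S arbitrary: v rule: finite_induct)
  case empty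
  then show ?case by auto
next
  case (insert w S)
  define u where "u = v w"
  show ?case
  proof (cases "u = 0")
    case True
    have "(\<Sum>i\<in>insert w S. (if i = w then 1 else 0) *s v i) = u"
      using insert(1,2) by (subst sum.insert) (auto simp: u_def intro!: sum.neutral)
    then show ?thesis using True
      by (intro disjI2 exI[of _ "\<lambda>i. if i = w then (1::rat) else 0"]) auto
  next
    case unz: False
    from insert(3)[of v] show ?thesis
    proof
      assume "\<exists>a. (\<forall>i\<in>S. 0 \<le> a i) \<and> (\<exists>i\<in>S. a i \<noteq> 0) \<and> (\<Sum>i\<in>S. a i *s v i) = 0"
      then obtain a where a: "\<forall>i\<in>S. 0 \<le> a i" "\<exists>i\<in>S. a i \<noteq> 0" "(\<Sum>i\<in>S. a i *s v i) = 0"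
        by blast
      have "(\<Sum>i\<in>insert w S. (a(w := 0)) i *s v i) = (\<Sum>i\<in>S. a i *s v i)"
        using insert(1,2) by (simp, intro sum.cong) auto
      then show ?thesis using a insert(2)
        by (intro disjI2 exI[of _ "a(w := 0)"]) auto
    next
      assume "\<exists>l. \<forall>i\<in>S. 0 < dotq l (v i)"
      then obtain l where l: "\<forall>i\<in>S. 0 < dotq l (v i)" by blast
      show ?thesis
      proof (cases "0 < dotq l u")
        case True
        then show ?thesis using l by (intro disjI1 exI[of _ l]) (auto simp: u_def)
      next
        case lu: False
        define P where "P x = x - (dotq x u / dotq u u) *s u" for x
        have upos: "0 < dotq u u" using unz dotq_self_pos by blast
        have Psym: "dotq (P x) y = dotq x (P y)" for x y
        proof -
          have 1: "dotq (P x) y = dotq x y - (dotq x u / dotq u u) * dotq u y"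
            unfolding P_def dotq_diff_left dotq_scale_left ..
          have 2: "dotq x (P y) = dotq x y - (dotq y u / dotq u u) * dotq x u"
            unfolding P_def dotq_diff_right dotq_scale_right ..
          show ?thesis unfolding 1 2 dotq_commute[of u y] by simp
        qed
        have Pu: "dotq (P x) u = 0" for x
        proof -
          have "dotq (P x) u = dotq x u - (dotq x u / dotq u u) * dotq u u"
            unfolding P_def dotq_diff_left dotq_scale_left ..
          then show ?thesis using upos by simp
        qed
        from insert(3)[of "\<lambda>i. P (v i)"] show ?thesis
        proof
          assume "\<exists>m. \<forall>i\<in>S. 0 < dotq m (P (v i))"
          then obtain m where m: "\<forall>i\<in>S. 0 < dotq m (P (v i))" by blast
          define n where "n = P m"
          have npos: "\<forall>i\<in>S. 0 < dotq n (v i)" using m Psym n_def by simp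
          obtain t where t: "t > 0" "\<forall>i\<in>S. 0 < dotq n (v i) + t * dotq u (v i)"
            using small_t[OF insert(1) npos, of "\<lambda>i. dotq u (v i)"] by blast
          define l' where "l' = n + t *s u"
          have "0 < dotq l' u" unfolding l'_def dotq_add_left dotq_scale_left
            using Pu[of m] n_def t upos by simp
          moreover have "\<forall>i\<in>S. 0 < dotq l' (v i)" unfolding l'_def dotq_add_left dotq_scale_left
            using t by simp
          ultimately show ?thesis by (intro disjI1 exI[of _ l']) (auto simp: u_def)
        next
          assume "\<exists>a. (\<forall>i\<in>S. 0 \<le> a i) \<and> (\<exists>i\<in>S. a i \<noteq> 0) \<and> (\<Sum>i\<in>S. a i *s P (v i)) = 0"
          then obtain a where a: "\<forall>i\<in>S. 0 \<le> a i" "\<exists>i\<in>S. a i \<noteq> 0" "(\<Sum>i\<in>S. a i *s P (v i)) = 0"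
            by blast
          define c where "c = (\<Sum>i\<in>S. a i * dotq (v i) u) / dotq u u"
          have "(\<Sum>i\<in>S. a i *s P (v i)) = (\<Sum>i\<in>S. a i *s v i) - c *s u"
          proof -
            have "(\<Sum>i\<in>S. a i *s P (v i)) = (\<Sum>i\<in>S. a i *s v i - (a i * dotq (v i) u / dotq u u) *s u)"
              unfolding P_def by (intro sum.cong refl) (simp add: vec_eq_iff algebra_simps)
            also have "\<dots> = (\<Sum>i\<in>S. a i *s v i) - (\<Sum>i\<in>S. (a i * dotq (v i) u / dotq u u) *s u)"
              by (rule sum_subtractf)
            also have "(\<Sum>i\<in>S. (a i * dotq (v i) u / dotq u u) *s u) = c *s u"
              unfolding c_def vec.scale_sum_left[symmetric] sum_divide_distrib ..
            finally show ?thesis .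
          qed
          with a(3) have sa: "(\<Sum>i\<in>S. a i *s v i) = c *s u" by simp
          show ?thesis
          proof (cases "c \<le> 0")
            case True
            have "(\<Sum>i\<in>insert w S. (a(w := -c)) i *s v i) = (-c) *s u + (\<Sum>i\<in>S. a i *s v i)"
              using insert(1,2) by (simp add: u_def, intro sum.cong) auto
            also have "\<dots> = 0" using sa by (simp add: vec_eq_iff)
            finally show ?thesis using a True insert(2)
              by (intro disjI2 exI[of _ "a(w := -c)"]) auto
          next
            case False
            have "dotq l (\<Sum>i\<in>S. a i *s v i) = (\<Sum>i\<in>S. a i * dotq l (v i))"
              by (simp add: dotq_sum_right dotq_scale_right)
            moreover have "0 < (\<Sum>i\<in>S. a i * dotq l (v i))"
            proof -
              obtain j where j: "j \<in> S" "a j \<noteq> 0" using a by blast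
              then have "0 < a j * dotq l (v j)" using a(1) l by (simp add: order_le_neq_trans)
              then show ?thesis using a(1) l j insert(1)
                by (intro sum_pos2[where i=j]) auto
            qed
            moreover have "dotq l (c *s u) \<le> 0" using False lu
              by (simp add: dotq_scale_right mult_nonneg_nonpos)
            ultimately show ?thesis using sa by simp
          qed
        qed
      qed
    qed
  qed
qed


section \<open>Relations among a finite family of rational vectors\<close>

definition relsum :: "('n::finite \<Rightarrow> rat^'r) \<Rightarrow> ('n \<Rightarrow> rat) \<Rightarrow> rat^'r" where
  "relsum v c = (\<Sum>i\<in>UNIV. c i *s v i)"

definition nnrel :: "('n::finite \<Rightarrow> rat^'r) \<Rightarrow> ('n \<Rightarrow> rat) \<Rightarrow> bool" where
  "nnrel v c \<longleftrightarrow> (\<forall>i. 0 \<le> c i) \<and> (\<exists>i. c i \<noteq> 0) \<and> relsum v c = 0"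

definition acyc :: "('n::finite \<Rightarrow> rat^'r) \<Rightarrow> 'n set \<Rightarrow> bool" where
  "acyc v S \<longleftrightarrow> \<not> (\<exists>c. nnrel v c \<and> {i. c i \<noteq> 0} \<subseteq> S)"

definition findep :: "('n::finite \<Rightarrow> rat^'r) \<Rightarrow> 'n set \<Rightarrow> bool" where
  "findep v S \<longleftrightarrow> (\<forall>c. relsum v c = 0 \<longrightarrow> {i. c i \<noteq> 0} \<subseteq> S \<longrightarrow> (\<forall>i. c i = 0))"

definition minc :: "('n::finite \<Rightarrow> rat^'r) \<Rightarrow> 'n set \<Rightarrow> bool" where
  "minc v C \<longleftrightarrow> (\<exists>a. nnrel v a \<and> {i. a i \<noteq> 0} = C) \<and> (\<forall>b. nnrel v b \<longrightarrow> \<not> {i. b i \<noteq> 0} \<subset> C)"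

lemma relsum_supp:
  assumes "\<And>x. x \<notin> S \<Longrightarrow> c x = 0"
  shows "relsum v c = (\<Sum>x\<in>S. c x *s v x)"
  unfolding relsum_def using assms by (intro sum.mono_neutral_right) auto

lemma relsum_add: "relsum v (\<lambda>i. c i + d i) = relsum v c + relsum v d"
  unfolding relsum_def by (simp add: vector_sadd_rdistrib sum.distrib)

lemma relsum_diff: "relsum v (\<lambda>i. c i - d i) = relsum v c - relsum v d"
  unfolding relsum_def by (simp add: vector_sub_rdistrib sum_subtractf)

lemma relsum_scale: "relsum v (\<lambda>i. r * c i) = r *s relsum v c"
  unfolding relsum_def by (simp add: vec.scale_sum_right vector_smult_assoc)

lemma relsum_sum: "relsum v (\<lambda>i. \<Sum>j\<in>J. c j i) = (\<Sum>j\<in>J. relsum v (c j))"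
  unfolding relsum_def by (simp add: vec.scale_sum_left) (rule sum.swap)

lemma relsum_zero[simp]: "relsum v (\<lambda>i. 0) = 0"
  unfolding relsum_def by simp

lemma relsum_in_span:
  assumes "\<And>x. x \<notin> S \<Longrightarrow> c x = 0"
  shows "relsum v c \<in> vec.span (v ` S)"
proof -
  have "relsum v c = (\<Sum>x\<in>S. c x *s v x)" by (rule relsum_supp) (rule assms)
  moreover have "(\<Sum>x\<in>S. c x *s v x) \<in> vec.span (v ` S)"
    by (intro vec.span_sum vec.span_scale vec.span_base) auto
  ultimately show ?thesis by simp
qed

lemma span_image_repr:
  assumes "x \<in> vec.span (v ` S)"
  shows "\<exists>c. (\<forall>i. i \<notin> S \<longrightarrow> c i = 0) \<and> x = relsum v c"
  using assms
proof (induction rule: vec.span_induct_alt)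
  case base
  then show ?case by (intro exI[of _ "\<lambda>i. 0"]) auto
next
  case (step r y z)
  then obtain c where c: "\<forall>i. i \<notin> S \<longrightarrow> c i = 0" "z = relsum v c" by blast
  from step(1) obtain j where j: "j \<in> S" "y = v j" by blast
  define d where "d = (\<lambda>i. (if i = j then r else 0) + c i)"
  have "relsum v (\<lambda>i. if i = j then r else 0) = r *s v j"
    by (subst relsum_supp[of "{j}"]) auto
  then have "relsum v d = r *s y + z" unfolding d_def relsum_add using c j by simp
  moreover have "\<forall>i. i \<notin> S \<longrightarrow> d i = 0" using c j unfolding d_def by auto
  ultimately show ?case by metis
qed

lemma findep_iff_dim:
  fixes v :: "'n::finite \<Rightarrow> rat^'r"
  shows "findep v A \<longleftrightarrow> vec.dim (vec.span (v ` A)) = card A"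
proof
  assume F: "findep v A"
  have inj: "inj_on v A"
  proof (rule inj_onI, rule ccontr)
    fix i k assume ik: "i \<in> A" "k \<in> A" "v i = v k" "i \<noteq> k"
    define c where "c = (\<lambda>x. if x = i then (1::rat) else if x = k then -1 else 0)"
    have "relsum v c = c i *s v i + c k *s v k"
      using ik by (subst relsum_supp[of "{i,k}"]) (auto simp: c_def)
    also have "\<dots> = 0" using ik by (simp add: c_def vec_eq_iff)
    finally have r: "relsum v c = 0" .
    have sub: "{x. c x \<noteq> 0} \<subseteq> A" using ik by (auto simp: c_def split: if_splits)
    have "c i = 0" using F r sub unfolding findep_def by blast
    then show False by (simp add: c_def)
  qed
  have indep: "vec.independent (v ` A)"
  proof
    assume "vec.dependent (v ` A)"
    then obtain u where u: "\<exists>w\<in>v ` A. u w \<noteq> 0" "(\<Sum>w\<in>v ` A. u w *s w) = 0"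
      using vec.dependent_finite[of "v ` A"] by auto
    define c where "c = (\<lambda>x. if x \<in> A then u (v x) else 0)"
    have "relsum v c = (\<Sum>x\<in>A. u (v x) *s v x)"
      by (subst relsum_supp[of A]) (auto simp: c_def)
    also have "\<dots> = (\<Sum>w\<in>v ` A. u w *s w)"
      using sum.reindex[OF inj, of "\<lambda>w. u w *s w"] by simp
    finally have r: "relsum v c = 0" using u by simp
    have sub: "{x. c x \<noteq> 0} \<subseteq> A" by (auto simp: c_def split: if_splits)
    have "\<forall>x. c x = 0" using F r sub unfolding findep_def by blast
    then show False using u unfolding c_def by (metis (mono_tags) image_iff)
  qed
  show "vec.dim (vec.span (v ` A)) = card A"
    using vec.dim_span_eq_card_independent[OF indep] card_image[OF inj] by simp
next
  assume D: "vec.dim (vec.span (v ` A)) = card A"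
  have "vec.dim (vec.span (v ` A)) \<le> card (v ` A)"
    by (rule vec.dim_le_card) auto
  moreover have "card (v ` A) \<le> card A" by (rule card_image_le) auto
  ultimately have cA: "card (v ` A) = card A" using D by simp
  then have inj: "inj_on v A" by (intro eq_card_imp_inj_on) auto
  have indep: "vec.independent (v ` A)"
  proof -
    have "vec.independent (v ` A) \<longleftrightarrow> vec.span (v ` A) \<subseteq> vec.span (v ` A)"
    proof (rule vec.card_eq_dim)
      show "v ` A \<subseteq> vec.span (v ` A)" by (rule vec.span_superset)
      show "card (v ` A) = vec.dim (vec.span (v ` A))" using D cA by simp
    qed auto
    then show ?thesis by simp
  qed
  show "findep v A" unfolding findep_def
  proof (intro allI impI)
    fix c i assume c: "relsum v c = 0" "{i. c i \<noteq> 0} \<subseteq> A"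
    have "relsum v c = (\<Sum>x\<in>A. c x *s v x)"
      using c by (subst relsum_supp[of A]) auto
    also have "\<dots> = (\<Sum>w\<in>v ` A. c (inv_into A v w) *s w)"
      using sum.reindex[OF inj, of "\<lambda>w. c (inv_into A v w) *s w"] inj by simp
    finally have "(\<Sum>w\<in>v ` A. c (inv_into A v w) *s w) = 0" using c by simp
    then have "\<forall>w\<in>v ` A. c (inv_into A v w) = 0"
      using indep vec.dependent_finite[of "v ` A"] by auto
    then show "c i = 0" using c inj by (cases "i \<in> A") auto
  qed
qed

lemma gordan_acyc:
  fixes v :: "'n::finite \<Rightarrow> rat^'r"
  assumes "acyc v S"
  shows "\<exists>l. \<forall>i\<in>S. 0 < dotq l (v i)"
proof -
  have "\<not> (\<exists>a. (\<forall>i\<in>S. 0 \<le> a i) \<and> (\<exists>i\<in>S. a i \<noteq> 0) \<and> (\<Sum>i\<in>S. a i *s v i) = 0)"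
  proof
    assume "\<exists>a. (\<forall>i\<in>S. 0 \<le> a i) \<and> (\<exists>i\<in>S. a i \<noteq> 0) \<and> (\<Sum>i\<in>S. a i *s v i) = 0"
    then obtain a where a: "\<forall>i\<in>S. 0 \<le> a i" "\<exists>i\<in>S. a i \<noteq> 0" "(\<Sum>i\<in>S. a i *s v i) = 0" by blast
    define c where "c = (\<lambda>i. if i \<in> S then a i else 0)"
    have "relsum v c = (\<Sum>i\<in>S. a i *s v i)"
      by (subst relsum_supp[of S]) (auto simp: c_def)
    then have "nnrel v c" using a unfolding nnrel_def c_def by auto
    moreover have "{i. c i \<noteq> 0} \<subseteq> S" unfolding c_def by auto
    ultimately show False using assms unfolding acyc_def by blast
  qed
  then show ?thesis using gordan[of S v] by auto
qed


lemma nn_pos: "0 \<le> (x::rat) \<Longrightarrow> x \<noteq> 0 \<Longrightarrow> 0 < x" by simp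

lemma exists_minc:
  fixes v :: "'n::finite \<Rightarrow> rat^'r"
  assumes "nnrel v a" shows "\<exists>C. minc v C \<and> C \<subseteq> {i. a i \<noteq> 0}"
proof -
  have "\<forall>a. nnrel v a \<longrightarrow> card {i. a i \<noteq> 0} = n \<longrightarrow> (\<exists>C. minc v C \<and> C \<subseteq> {i. a i \<noteq> 0})" for n
  proof (induction n rule: less_induct)
    case (less n)
    show ?case
    proof (intro allI impI)
      fix a assume a: "nnrel v a" "card {i. a i \<noteq> 0} = n"
      show "\<exists>C. minc v C \<and> C \<subseteq> {i. a i \<noteq> 0}"
      proof (cases "\<exists>b. nnrel v b \<and> {i. b i \<noteq> 0} \<subset> {i. a i \<noteq> 0}")
        case True
        then obtain b where b: "nnrel v b" "{i. b i \<noteq> 0} \<subset> {i. a i \<noteq> 0}" by blast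
        have "card {i. b i \<noteq> 0} < n" using psubset_card_mono[OF _ b(2)] a(2) by simp
        then obtain C where "minc v C" "C \<subseteq> {i. b i \<noteq> 0}" using less b(1) by blast
        then show ?thesis using b(2) by blast
      next
        case False
        then have "minc v {i. a i \<noteq> 0}" unfolding minc_def using a(1) by blast
        then show ?thesis by blast
      qed
    qed
  qed
  then show ?thesis using assms by blast
qed

lemma conf:
  fixes v :: "'n::finite \<Rightarrow> rat^'r"
  assumes P: "\<forall>S. acyc v S \<longrightarrow> findep v S"
  shows "relsum v c = 0 \<Longrightarrow> (\<exists>i. c i \<noteq> 0) \<Longrightarrow>
    \<exists>f. nnrel v f \<and> ({i. f i \<noteq> 0} \<subseteq> {i. c i > 0} \<or> {i. f i \<noteq> 0} \<subseteq> {i. c i < 0})"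
proof (induction "card {i. c i \<noteq> 0}" arbitrary: c rule: less_induct)
  case (less c)
  let ?S = "{i. c i \<noteq> 0}"
  have "\<not> findep v ?S" unfolding findep_def using less.prems by blast
  then have "\<not> acyc v ?S" using P by blast
  then obtain f where f: "nnrel v f" "{i. f i \<noteq> 0} \<subseteq> ?S" unfolding acyc_def by blast
  have fnn: "\<forall>i. 0 \<le> f i" and frel: "relsum v f = 0" using f(1) unfolding nnrel_def by blast+
  have fc: "c i = 0 \<Longrightarrow> f i = 0" for i using f(2) by blast
  show ?case
  proof (cases "{i. f i \<noteq> 0} \<subseteq> {i. c i > 0} \<or> {i. f i \<noteq> 0} \<subseteq> {i. c i < 0}")
    case True then show ?thesis using f by blast
  next
    case False
    then obtain k1 k2 where k1: "f k1 \<noteq> 0" "\<not> c k1 > 0" and k2: "f k2 \<noteq> 0" "\<not> c k2 < 0" by blast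
    have ck1: "c k1 < 0" proof -
      have "c k1 \<noteq> 0" using k1 fc by blast
      then show ?thesis using k1 by simp
    qed
    have ck2: "c k2 > 0" proof -
      have "c k2 \<noteq> 0" using k2 fc by blast
      then show ?thesis using k2 by simp
    qed
    define K where "K = {k. f k \<noteq> 0 \<and> c k > 0}"
    have K: "finite K" "k2 \<in> K" unfolding K_def using k2 ck2 by auto
    define t where "t = Min ((\<lambda>k. c k / f k) ` K)"
    have "t \<in> (\<lambda>k. c k / f k) ` K" unfolding t_def using K by (intro Min_in) auto
    then obtain ks where ks: "ks \<in> K" "t = c ks / f ks" by blast
    have tle: "t \<le> c k / f k" if "k \<in> K" for k unfolding t_def using K that by (intro Min_le) auto
    have fpos: "f ks > 0" using ks fnn[rule_format, of ks] unfolding K_def by (intro nn_pos) auto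
    have tpos: "t > 0" using ks fpos unfolding K_def by simp
    define c' where "c' = (\<lambda>i. c i - t * f i)"
    have rel: "relsum v c' = 0" unfolding c'_def relsum_diff relsum_scale using less.prems frel by simp
    have "t * f k1 \<ge> 0" using tpos fnn by simp
    then have c'k1: "c' k1 \<noteq> 0" unfolding c'_def using ck1 by linarith
    have sub: "{i. c' i \<noteq> 0} \<subseteq> ?S - {ks}"
    proof
      fix i assume i: "i \<in> {i. c' i \<noteq> 0}"
      have "c i \<noteq> 0" using i fc unfolding c'_def by auto
      moreover have "i \<noteq> ks" using i ks fpos unfolding c'_def by auto
      ultimately show "i \<in> ?S - {ks}" by simp
    qed
    have "ks \<in> ?S" using ks unfolding K_def by simp
    then have card: "card {i. c' i \<noteq> 0} < card ?S"
    proof -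
      have "card {i. c' i \<noteq> 0} \<le> card (?S - {ks})" using sub by (intro card_mono) auto
      also have "\<dots> < card ?S" using \<open>ks \<in> ?S\<close> by (intro card_Diff1_less) auto
      finally show ?thesis .
    qed
    have pos: "{i. c' i > 0} \<subseteq> {i. c i > 0}"
    proof
      fix i assume "i \<in> {i. c' i > 0}"
      moreover have "t * f i \<ge> 0" using tpos fnn by simp
      ultimately show "i \<in> {i. c i > 0}" unfolding c'_def by simp
    qed
    have neg: "{i. c' i < 0} \<subseteq> {i. c i < 0}"
    proof
      fix i assume i: "i \<in> {i. c' i < 0}"
      show "i \<in> {i. c i < 0}"
      proof (rule ccontr)
        assume "i \<notin> {i. c i < 0}"
        then have ci: "c i \<ge> 0" by simp
        show False
        proof (cases "c i = 0")
          case True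
          then show False using i fc unfolding c'_def by simp
        next
          case False
          then have cpos: "c i > 0" using ci by simp
          have lt: "c i < t * f i" using i unfolding c'_def by simp
          have "f i \<noteq> 0" using lt cpos by auto
          then have "i \<in> K" unfolding K_def using cpos by simp
          then have "t \<le> c i / f i" by (rule tle)
          moreover have "f i > 0" using \<open>f i \<noteq> 0\<close> fnn[rule_format, of i] by (intro nn_pos)
          ultimately have "t * f i \<le> c i" by (simp add: pos_le_divide_eq)
          then show False using lt by simp
        qed
      qed
    qed
    obtain f' where f': "nnrel v f'" "{i. f' i \<noteq> 0} \<subseteq> {i. c' i > 0} \<or> {i. f' i \<noteq> 0} \<subseteq> {i. c' i < 0}"
      using less.hyps[OF card rel] c'k1 by blast
    then show ?thesis using pos neg by blast
  qed
qed

lemma minc_disjoint: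
  fixes v :: "'n::finite \<Rightarrow> rat^'r"
  assumes P: "\<forall>S. acyc v S \<longrightarrow> findep v S"
    and C: "minc v C" and D: "minc v D" and CD: "C \<noteq> D"
  shows "C \<inter> D = {}"
proof (rule ccontr)
  assume "C \<inter> D \<noteq> {}"
  then obtain i where i: "i \<in> C" "i \<in> D" by blast
  obtain a where a: "nnrel v a" "{i. a i \<noteq> 0} = C" using C unfolding minc_def by blast
  obtain b where b: "nnrel v b" "{i. b i \<noteq> 0} = D" using D unfolding minc_def by blast
  have ann: "\<forall>k. 0 \<le> a k" and bnn: "\<forall>k. 0 \<le> b k" using a b unfolding nnrel_def by blast+
  have ai: "a i > 0" using i a ann[rule_format, of i] by (intro nn_pos) auto
  have bi: "b i > 0" using i b bnn[rule_format, of i] by (intro nn_pos) auto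
  define c where "c = (\<lambda>k. b i * a k - a i * b k)"
  have rel: "relsum v c = 0" unfolding c_def relsum_diff relsum_scale using a b unfolding nnrel_def by simp
  have nz: "\<exists>k. c k \<noteq> 0"
  proof (rule ccontr)
    assume "\<not> (\<exists>k. c k \<noteq> 0)"
    then have eq: "b i * a k = a i * b k" for k unfolding c_def by auto
    have "a k \<noteq> 0 \<longleftrightarrow> b k \<noteq> 0" for k using eq[of k] ai bi by auto
    then have "C = D" using a b by auto
    then show False using CD by simp
  qed
  obtain f where f: "nnrel v f" "{k. f k \<noteq> 0} \<subseteq> {k. c k > 0} \<or> {k. f k \<noteq> 0} \<subseteq> {k. c k < 0}"
    using conf[OF P rel nz] by blast
  have ci: "c i = 0" unfolding c_def by simp
  show False
  proof (cases "{k. f k \<noteq> 0} \<subseteq> {k. c k > 0}")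
    case True
    have "{k. c k > 0} \<subseteq> C - {i}"
    proof
      fix k assume k: "k \<in> {k. c k > 0}"
      have "a k \<noteq> 0"
      proof
        assume "a k = 0"
        then have "c k = - (a i * b k)" unfolding c_def by simp
        moreover have "a i * b k \<ge> 0" using ai bnn by simp
        ultimately show False using k by simp
      qed
      then show "k \<in> C - {i}" using a k ci by auto
    qed
    then have "{k. f k \<noteq> 0} \<subset> C" using True i by blast
    then show False using C f(1) unfolding minc_def by blast
  next
    case False
    then have F: "{k. f k \<noteq> 0} \<subseteq> {k. c k < 0}" using f by blast
    have "{k. c k < 0} \<subseteq> D - {i}"
    proof
      fix k assume k: "k \<in> {k. c k < 0}"
      have "b k \<noteq> 0"
      proof
        assume "b k = 0"
        then have "c k = b i * a k" unfolding c_def by simp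
        moreover have "b i * a k \<ge> 0" using bi ann by simp
        ultimately show False using k by simp
      qed
      then show "k \<in> D - {i}" using b k ci by auto
    qed
    then have "{k. f k \<noteq> 0} \<subset> D" using F i by blast
    then show False using D f(1) unfolding minc_def by blast
  qed
qed

lemma minc_nonempty: "minc v C \<Longrightarrow> C \<noteq> {}"
  unfolding minc_def nnrel_def by auto

lemma minc_sub_findep:
  fixes v :: "'n::finite \<Rightarrow> rat^'r"
  assumes P: "\<forall>S. acyc v S \<longrightarrow> findep v S" and C: "minc v C" and i0: "i0 \<in> C"
  shows "findep v (C - {i0})"
proof -
  have "acyc v (C - {i0})"
    unfolding acyc_def
  proof
    assume "\<exists>c. nnrel v c \<and> {i. c i \<noteq> 0} \<subseteq> C - {i0}"
    then obtain b where "nnrel v b" "{i. b i \<noteq> 0} \<subseteq> C - {i0}" by blast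
    moreover have "C - {i0} \<subset> C" using i0 by blast
    ultimately show False using C unfolding minc_def by blast
  qed
  then show ?thesis using P by blast
qed

lemma minc_span:
  fixes v :: "'n::finite \<Rightarrow> rat^'r"
  assumes C: "minc v C" and i0: "i0 \<in> C"
  shows "vec.span (v ` C) = vec.span (v ` (C - {i0}))"
proof -
  obtain a where a: "nnrel v a" "{i. a i \<noteq> 0} = C" using C unfolding minc_def by blast
  have a0: "a i0 \<noteq> 0" using a i0 by blast
  have "relsum v a = (\<Sum>x\<in>C. a x *s v x)" using a by (intro relsum_supp) auto
  also have "\<dots> = a i0 *s v i0 + (\<Sum>x\<in>C - {i0}. a x *s v x)"
    using i0 by (simp add: sum.remove)
  finally have "a i0 *s v i0 = - (\<Sum>x\<in>C - {i0}. a x *s v x)"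
    using a unfolding nnrel_def by (simp add: eq_neg_iff_add_eq_0)
  moreover have "- (\<Sum>x\<in>C - {i0}. a x *s v x) \<in> vec.span (v ` (C - {i0}))"
    by (intro vec.span_neg vec.span_sum vec.span_scale vec.span_base) auto
  ultimately have "a i0 *s v i0 \<in> vec.span (v ` (C - {i0}))" by simp
  then have "(1 / a i0) *s (a i0 *s v i0) \<in> vec.span (v ` (C - {i0}))" by (rule vec.span_scale)
  then have "v i0 \<in> vec.span (v ` (C - {i0}))" using a0 by (simp add: vector_smult_assoc)
  moreover have "v ` C = insert (v i0) (v ` (C - {i0}))" using i0 by blast
  ultimately show ?thesis using vec.span_redundant by simp
qed

lemma minc_dim:
  fixes v :: "'n::finite \<Rightarrow> rat^'r"
  assumes P: "\<forall>S. acyc v S \<longrightarrow> findep v S" and C: "minc v C"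
  shows "vec.dim (vec.span (v ` C)) = card C - 1"
proof -
  obtain i0 where i0: "i0 \<in> C" using minc_nonempty[OF C] by blast
  have "vec.dim (vec.span (v ` (C - {i0}))) = card (C - {i0})"
    using minc_sub_findep[OF P C i0] findep_iff_dim by blast
  then show ?thesis using minc_span[OF C i0] i0 by simp
qed

lemma minc_och:
  fixes v :: "'n::finite \<Rightarrow> rat^'r"
  assumes C: "minc v C"
  shows "0 \<in> open_convex_hull (v ` C)"
proof -
  obtain a where a: "nnrel v a" "{i. a i \<noteq> 0} = C" using C unfolding minc_def by blast
  have ann: "\<forall>k. 0 \<le> a k" using a unfolding nnrel_def by blast
  have apos: "a i > 0" if "i \<in> C" for i using that a ann[rule_format, of i] by (intro nn_pos) auto
  define A where "A = (\<Sum>i\<in>C. a i)"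
  obtain i1 where i1: "i1 \<in> C" using minc_nonempty[OF C] by blast
  have Apos: "A > 0" unfolding A_def using i1 apos by (intro sum_pos2[where i=i1]) (auto intro: less_imp_le)
  define g where "g w = (\<Sum>i\<in>{i\<in>C. v i = w}. a i) / A" for w
  have "(\<Sum>w\<in>v ` C. g w) = (\<Sum>w\<in>v ` C. \<Sum>i\<in>{i\<in>C. v i = w}. a i) / A"
    unfolding g_def by (simp add: sum_divide_distrib)
  also have "(\<Sum>w\<in>v ` C. \<Sum>i\<in>{i\<in>C. v i = w}. a i) = A"
    unfolding A_def by (rule sum.image_gen[symmetric]) simp
  finally have g1: "(\<Sum>w\<in>v ` C. g w) = 1" using Apos by simp
  have gpos: "\<forall>w\<in>v ` C. g w > 0"
  proof
    fix w assume "w \<in> v ` C"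
    then obtain i where i: "i \<in> C" "v i = w" by blast
    have "0 < (\<Sum>i\<in>{i\<in>C. v i = w}. a i)"
      using i apos by (intro sum_pos2[where i=i]) (auto intro: less_imp_le)
    then show "g w > 0" unfolding g_def using Apos by simp
  qed
  have "(\<Sum>w\<in>v ` C. g w *s w) = (\<Sum>w\<in>v ` C. (1 / A) *s (\<Sum>i\<in>{i\<in>C. v i = w}. a i *s v i))"
  proof (rule sum.cong[OF refl])
    fix w assume "w \<in> v ` C"
    have "(\<Sum>i\<in>{i\<in>C. v i = w}. a i *s v i) = (\<Sum>i\<in>{i\<in>C. v i = w}. a i *s w)"
      by (rule sum.cong) auto
    also have "\<dots> = (\<Sum>i\<in>{i\<in>C. v i = w}. a i) *s w" by (simp add: vec.scale_sum_left)
    finally show "g w *s w = (1 / A) *s (\<Sum>i\<in>{i\<in>C. v i = w}. a i *s v i)"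
      unfolding g_def by (simp add: vector_smult_assoc)
  qed
  also have "\<dots> = (1 / A) *s (\<Sum>w\<in>v ` C. \<Sum>i\<in>{i\<in>C. v i = w}. a i *s v i)"
    by (simp add: vec.scale_sum_right)
  also have "(\<Sum>w\<in>v ` C. \<Sum>i\<in>{i\<in>C. v i = w}. a i *s v i) = (\<Sum>i\<in>C. a i *s v i)"
    by (rule sum.image_gen[symmetric]) simp
  also have "(\<Sum>i\<in>C. a i *s v i) = relsum v a" using a by (intro relsum_supp[symmetric]) auto
  also have "\<dots> = 0" using a unfolding nnrel_def by simp
  finally have "(\<Sum>w\<in>v ` C. g w *s w) = 0" by simp
  then show ?thesis unfolding open_convex_hull_def using g1 gpos by force
qed


lemma partition_exists:
  fixes v :: "'n::finite \<Rightarrow> rat^'r"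
  assumes P: "\<forall>S. acyc v S \<longrightarrow> findep v S"
  shows "\<exists>(l::nat) (I :: nat \<Rightarrow> 'n set).
       (\<Union>j\<in>{0..l}. I j) = UNIV \<and>
       (\<forall>j\<in>{0..l}. \<forall>k\<in>{0..l}. j \<noteq> k \<longrightarrow> I j \<inter> I k = {}) \<and>
       (\<forall>j\<in>{1..l}. I j \<noteq> {}) \<and>
       is_direct_sum (vec.span (v ` UNIV)) {0..l} (\<lambda>j. vec.span (v ` I j)) \<and>
       vec.dim (vec.span (v ` I 0)) = card (I 0) \<and>
       (\<forall>j\<in>{1..l}. vec.dim (vec.span (v ` I j)) = card (I j) - 1) \<and>
       (\<forall>j\<in>{1..l}. 0 \<in> open_convex_hull (v ` I j))"
proof -
  define M where "M = {C. minc v C}"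
  have finM: "finite M" by (rule finite_subset[OF subset_UNIV]) simp
  obtain h where h: "bij_betw h {0..<card M} M" using ex_bij_betw_nat_finite[OF finM] by blast
  define l where "l = card M"
  define I where "I j = (if j = 0 then UNIV - \<Union>M else h (j - 1))" for j
  have Ij: "minc v (I j)" if "j \<in> {1..l}" for j
  proof -
    have "j - 1 \<in> {0..<card M}" using that unfolding l_def by auto
    then have "h (j - 1) \<in> M" using h bij_betwE by blast
    then show ?thesis using that unfolding I_def M_def by auto
  qed
  have Isurj: "\<exists>j\<in>{1..l}. I j = C" if "minc v C" for C
  proof -
    have "C \<in> h ` {0..<card M}" using that h unfolding M_def bij_betw_def by auto
    then obtain k where k: "k < card M" "C = h k" by auto
    then show ?thesis unfolding I_def l_def by (intro bexI[of _ "k + 1"]) auto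
  qed
  have Iinj: "I j \<noteq> I k" if "j \<in> {1..l}" "k \<in> {1..l}" "j \<noteq> k" for j k
  proof
    assume "I j = I k"
    then have "h (j - 1) = h (k - 1)" using that unfolding I_def by auto
    moreover have "j - 1 \<in> {0..<card M}" "k - 1 \<in> {0..<card M}" using that unfolding l_def by auto
    ultimately have "j - 1 = k - 1" using h unfolding bij_betw_def inj_on_def by blast
    then show False using that by auto
  qed
  have cover: "(\<Union>j\<in>{0..l}. I j) = UNIV"
  proof (intro set_eqI iffI)
    fix x :: 'n
    show "x \<in> (\<Union>j\<in>{0..l}. I j)"
    proof (cases "x \<in> \<Union>M")
      case True
      then obtain C where "C \<in> M" "x \<in> C" by blast
      then obtain j where "j \<in> {1..l}" "I j = C" using Isurj unfolding M_def by blast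
      then show ?thesis using \<open>x \<in> C\<close> by auto
    next
      case False
      then show ?thesis unfolding I_def by (intro UN_I[of 0]) auto
    qed
  qed auto
  have I0M: "I 0 \<inter> C = {}" if "minc v C" for C using that unfolding I_def M_def by auto
  have disj: "\<forall>j\<in>{0..l}. \<forall>k\<in>{0..l}. j \<noteq> k \<longrightarrow> I j \<inter> I k = {}"
  proof (intro ballI impI)
    fix j k assume jk: "j \<in> {0..l}" "k \<in> {0..l}" "j \<noteq> k"
    show "I j \<inter> I k = {}"
    proof (cases "j = 0")
      case True
      then have "k \<in> {1..l}" using jk by auto
      then show ?thesis using I0M[OF Ij] True by auto
    next
      case False
      note j0 = this
      show ?thesis
      proof (cases "k = 0")
        case True
        then have "j \<in> {1..l}" using jk j0 by auto
        then show ?thesis using I0M[OF Ij] True by auto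
      next
        case False
        then have "j \<in> {1..l}" "k \<in> {1..l}" using jk j0 by auto
        then show ?thesis using minc_disjoint[OF P Ij Ij Iinj] jk by auto
      qed
    qed
  qed
  have nonempty: "\<forall>j\<in>{1..l}. I j \<noteq> {}" using Ij minc_nonempty by blast
  have acyc0: "acyc v (I 0)"
    unfolding acyc_def
  proof
    assume "\<exists>c. nnrel v c \<and> {i. c i \<noteq> 0} \<subseteq> I 0"
    then obtain b where b: "nnrel v b" "{i. b i \<noteq> 0} \<subseteq> I 0" by blast
    obtain C where C: "minc v C" "C \<subseteq> {i. b i \<noteq> 0}" using exists_minc[OF b(1)] by blast
    then have "C \<subseteq> I 0" using b by blast
    then show False using I0M[OF C(1)] minc_nonempty[OF C(1)] by blast
  qed
  have dim0: "vec.dim (vec.span (v ` I 0)) = card (I 0)"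
    using P acyc0 findep_iff_dim by blast
  have dimj: "\<forall>j\<in>{1..l}. vec.dim (vec.span (v ` I j)) = card (I j) - 1"
    using minc_dim[OF P] Ij by blast
  have ochj: "\<forall>j\<in>{1..l}. 0 \<in> open_convex_hull (v ` I j)"
    using minc_och Ij by blast
  have ds: "is_direct_sum (vec.span (v ` UNIV)) {0..l} (\<lambda>j. vec.span (v ` I j))"
    unfolding is_direct_sum_def
  proof (intro conjI)
    show "\<forall>j\<in>{0..l}. vec.subspace (vec.span (v ` I j))" by (simp add: vec.subspace_span)
    show "vec.span (v ` UNIV) = vec.span (\<Union>j\<in>{0..l}. vec.span (v ` I j))"
    proof
      show "vec.span (v ` UNIV) \<subseteq> vec.span (\<Union>j\<in>{0..l}. vec.span (v ` I j))"
      proof (rule vec.span_mono, rule subsetI)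
        fix y assume "y \<in> v ` UNIV"
        then obtain x where x: "y = v x" by blast
        obtain j where j: "j \<in> {0..l}" "x \<in> I j" using cover by blast
        have "y \<in> vec.span (v ` I j)" using j x by (intro vec.span_base) auto
        then show "y \<in> (\<Union>j\<in>{0..l}. vec.span (v ` I j))" using j by blast
      qed
      show "vec.span (\<Union>j\<in>{0..l}. vec.span (v ` I j)) \<subseteq> vec.span (v ` UNIV)"
        by (intro vec.span_minimal vec.subspace_span UN_least vec.span_mono) auto
    qed
    show "\<forall>w. (\<forall>j\<in>{0..l}. w j \<in> vec.span (v ` I j)) \<longrightarrow> (\<Sum>j\<in>{0..l}. w j) = 0 \<longrightarrow> (\<forall>j\<in>{0..l}. w j = 0)"
    proof (intro allI impI)
      fix w assume w: "\<forall>j\<in>{0..l}. w j \<in> vec.span (v ` I j)" and w0: "(\<Sum>j\<in>{0..l}. w j) = 0"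
      define r where "r j = (SOME i. i \<in> I j)" for j
      have rI: "r j \<in> I j" if "j \<in> {1..l}" for j
        using nonempty that unfolding r_def by (metis ex_in_conv someI_ex)
      define X where "X = UNIV - r ` {1..l}"
      define XX where "XX j = I j - r ` {1..l}" for j
      have XXI: "XX j \<subseteq> I j" for j unfolding XX_def by auto
      have XXX: "XX j \<subseteq> X" for j unfolding XX_def X_def by auto
      have spanXX: "vec.span (v ` I j) = vec.span (v ` XX j)" if "j \<in> {0..l}" for j
      proof (cases "j = 0")
        case True
        have "r k \<notin> I 0" if "k \<in> {1..l}" for k using rI[OF that] I0M[OF Ij[OF that]] by blast
        then have "XX j = I j" unfolding XX_def using True by blast
        then show ?thesis by simp
      next
        case False
        then have j1: "j \<in> {1..l}" using that by auto
        have "r k \<notin> I j" if "k \<in> {1..l}" "k \<noteq> j" for k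
        proof -
          have "I k \<inter> I j = {}" using disj that j1 by auto
          then show ?thesis using rI[OF that(1)] by blast
        qed
        note rn = this
        have "XX j = I j - {r j}"
        proof
          show "XX j \<subseteq> I j - {r j}" unfolding XX_def using j1 by auto
          show "I j - {r j} \<subseteq> XX j"
          proof
            fix x assume x: "x \<in> I j - {r j}"
            have "x \<notin> r ` {1..l}"
            proof
              assume "x \<in> r ` {1..l}"
              then obtain k where k: "k \<in> {1..l}" "x = r k" by blast
              then have "k \<noteq> j" using x by auto
              then show False using rn[OF k(1)] k x by blast
            qed
            then show "x \<in> XX j" using x unfolding XX_def by blast
          qed
        qed
        then show ?thesis using minc_span[OF Ij[OF j1] rI[OF j1]] by simp
      qed
      have "\<forall>j\<in>{0..l}. \<exists>d. (\<forall>i. i \<notin> XX j \<longrightarrow> d i = 0) \<and> w j = relsum v d"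
        using w spanXX span_image_repr by metis
      then obtain c where c: "\<forall>j\<in>{0..l}. (\<forall>i. i \<notin> XX j \<longrightarrow> c j i = 0) \<and> w j = relsum v (c j)"
        by (metis (no_types) bchoice)
      define D where "D i = (\<Sum>j\<in>{0..l}. c j i)" for i
      have "relsum v D = (\<Sum>j\<in>{0..l}. relsum v (c j))" unfolding D_def by (rule relsum_sum)
      also have "\<dots> = (\<Sum>j\<in>{0..l}. w j)" using c by simp
      finally have relD: "relsum v D = 0" using w0 by simp
      have suppD: "{i. D i \<noteq> 0} \<subseteq> X"
      proof
        fix i assume "i \<in> {i. D i \<noteq> 0}"
        then obtain j where "j \<in> {0..l}" "c j i \<noteq> 0" unfolding D_def by (meson mem_Collect_eq sum.neutral)
        then show "i \<in> X" using c XXX by blast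
      qed
      have acycX: "acyc v X"
        unfolding acyc_def
      proof
        assume "\<exists>c. nnrel v c \<and> {i. c i \<noteq> 0} \<subseteq> X"
        then obtain b where b: "nnrel v b" "{i. b i \<noteq> 0} \<subseteq> X" by blast
        obtain C where C: "minc v C" "C \<subseteq> {i. b i \<noteq> 0}" using exists_minc[OF b(1)] by blast
        obtain j where j: "j \<in> {1..l}" "I j = C" using Isurj[OF C(1)] by blast
        have "r j \<in> X" using rI[OF j(1)] j(2) C(2) b(2) by blast
        then show False unfolding X_def using j(1) by blast
      qed
      have D0: "\<forall>i. D i = 0" using P acycX relD suppD unfolding findep_def by blast
      show "\<forall>j\<in>{0..l}. w j = 0"
      proof
        fix j assume j: "j \<in> {0..l}"
        have "c j i = 0" for i
        proof (cases "i \<in> XX j")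
          case False then show ?thesis using c j by blast
        next
          case True
          have "D i = c j i + (\<Sum>k\<in>{0..l} - {j}. c k i)" unfolding D_def using j
            by (simp add: sum.remove)
          moreover have "(\<Sum>k\<in>{0..l} - {j}. c k i) = 0"
          proof (rule sum.neutral, rule ballI)
            fix k assume k: "k \<in> {0..l} - {j}"
            have "i \<notin> XX k" using True XXI disj j k by blast
            then show "c k i = 0" using c k by blast
          qed
          ultimately show ?thesis using D0 by simp
        qed
        then have "c j = (\<lambda>i. 0)" by auto
        then show "w j = 0" using c j by simp
      qed
    qed
  qed
  show ?thesis
    using cover disj nonempty ds dim0 dimj ochj by blast
qed


lemma findepD: "findep v S \<Longrightarrow> relsum v c = 0 \<Longrightarrow> {i. c i \<noteq> 0} \<subseteq> S \<Longrightarrow> c i = 0"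
  unfolding findep_def by blast

lemma och_span:
  fixes v :: "'n::finite \<Rightarrow> rat^'r"
  assumes och: "0 \<in> open_convex_hull (v ` A)" and i0: "i0 \<in> A"
  shows "vec.span (v ` A) = vec.span (v ` (A - {i0}))"
proof -
  obtain g where g: "0 = (\<Sum>w\<in>v ` A. g w *s w)" "\<forall>w\<in>v ` A. g w > 0"
    using och unfolding open_convex_hull_def by blast
  have fin: "finite (v ` A)" by simp
  have "(\<Sum>w\<in>v ` A. g w *s w) = g (v i0) *s v i0 + (\<Sum>w\<in>v ` A - {v i0}. g w *s w)"
    by (rule sum.remove) (use i0 fin in auto)
  then have eq: "g (v i0) *s v i0 = - (\<Sum>w\<in>v ` A - {v i0}. g w *s w)"
    using g(1) by (simp add: eq_neg_iff_add_eq_0)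
  have "v ` A - {v i0} \<subseteq> v ` (A - {i0})" by blast
  then have "- (\<Sum>w\<in>v ` A - {v i0}. g w *s w) \<in> vec.span (v ` (A - {i0}))"
    by (intro vec.span_neg vec.span_sum vec.span_scale vec.span_base) auto
  then have "g (v i0) *s v i0 \<in> vec.span (v ` (A - {i0}))" using eq by simp
  then have "(1 / g (v i0)) *s (g (v i0) *s v i0) \<in> vec.span (v ` (A - {i0}))" by (rule vec.span_scale)
  moreover have "g (v i0) \<noteq> 0" using g(2) i0 by auto
  ultimately have "v i0 \<in> vec.span (v ` (A - {i0}))" by (simp add: vector_smult_assoc)
  moreover have "v ` A = insert (v i0) (v ` (A - {i0}))" using i0 by blast
  ultimately show ?thesis using vec.span_redundant by simp
qed

lemma och_nnrel:
  fixes v :: "'n::finite \<Rightarrow> rat^'r"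
  assumes och: "0 \<in> open_convex_hull (v ` A)" and ne: "A \<noteq> {}"
  shows "\<exists>a. nnrel v a \<and> {i. a i \<noteq> 0} \<subseteq> A"
proof -
  obtain g where g: "0 = (\<Sum>w\<in>v ` A. g w *s w)" "\<forall>w\<in>v ` A. g w > 0"
    using och unfolding open_convex_hull_def by blast
  define rep where "rep w = inv_into A v w" for w
  define a where "a i = (if i \<in> A \<and> rep (v i) = i then g (v i) else 0)" for i
  have repA: "rep w \<in> A" "v (rep w) = w" if "w \<in> v ` A" for w
    using that unfolding rep_def by (auto intro: inv_into_into f_inv_into_f)
  have injrep: "inj_on rep (v ` A)" unfolding rep_def by (rule inj_on_inv_into) simp
  have arep: "a (rep w) = g w" if "w \<in> v ` A" for w
    using repA[OF that] unfolding a_def by simp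
  have "relsum v a = (\<Sum>i\<in>rep ` v ` A. a i *s v i)"
  proof (rule relsum_supp)
    fix x assume "x \<notin> rep ` v ` A"
    show "a x = 0"
    proof (rule ccontr)
      assume "a x \<noteq> 0"
      then have "x \<in> A" "rep (v x) = x" unfolding a_def by (auto split: if_splits)
      then have "x \<in> rep ` v ` A" by (metis imageI)
      then show False using \<open>x \<notin> rep ` v ` A\<close> by blast
    qed
  qed
  also have "\<dots> = (\<Sum>w\<in>v ` A. a (rep w) *s v (rep w))"
    by (rule sum.reindex[OF injrep, unfolded comp_def])
  also have "\<dots> = (\<Sum>w\<in>v ` A. g w *s w)"
    by (rule sum.cong) (auto simp: arep repA)
  finally have rel: "relsum v a = 0" using g(1) by simp
  obtain i where i: "i \<in> A" using ne by blast
  have "a (rep (v i)) \<noteq> 0" using arep[of "v i"] g(2) i by auto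
  moreover have "\<forall>i. 0 \<le> a i" unfolding a_def using g(2) by (auto intro: less_imp_le)
  ultimately have "nnrel v a" using rel unfolding nnrel_def by blast
  moreover have "{i. a i \<noteq> 0} \<subseteq> A" unfolding a_def by auto
  ultimately show ?thesis by blast
qed

lemma partition_P:
  fixes v :: "'n::finite \<Rightarrow> rat^'r"
  assumes cover: "(\<Union>j\<in>{0..l}. I j) = UNIV"
    and disj: "\<forall>j\<in>{0..l}. \<forall>k\<in>{0..l}. j \<noteq> k \<longrightarrow> I j \<inter> I k = {}"
    and ne: "\<forall>j\<in>{1..l}. I j \<noteq> {}"
    and ds: "is_direct_sum (vec.span (v ` UNIV)) {0..l} (\<lambda>j. vec.span (v ` I j))"
    and d0: "vec.dim (vec.span (v ` I 0)) = card (I 0)"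
    and dj: "\<forall>j\<in>{1..l}. vec.dim (vec.span (v ` I j)) = card (I j) - 1"
    and och: "\<forall>j\<in>{1..l}. 0 \<in> open_convex_hull (v ` I j)"
  shows "\<forall>S. acyc v S \<longrightarrow> findep v S"
proof (intro allI impI)
  fix S assume S: "acyc v S"
  show "findep v S" unfolding findep_def
  proof (intro allI impI)
    fix c i assume c: "relsum v c = 0" "{i. c i \<noteq> 0} \<subseteq> S"
    define cj where "cj j i = (if i \<in> I j then c i else 0)" for j i
    have csum: "c x = (\<Sum>j\<in>{0..l}. cj j x)" for x
    proof -
      obtain j0 where j0: "j0 \<in> {0..l}" "x \<in> I j0" using cover by blast
      have "(\<Sum>j\<in>{0..l}. cj j x) = cj j0 x + (\<Sum>j\<in>{0..l} - {j0}. cj j x)"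
        using j0 by (simp add: sum.remove)
      moreover have "(\<Sum>j\<in>{0..l} - {j0}. cj j x) = 0"
      proof (rule sum.neutral, rule ballI)
        fix j assume j: "j \<in> {0..l} - {j0}"
        then have "x \<notin> I j" using disj j0 by blast
        then show "cj j x = 0" unfolding cj_def by simp
      qed
      ultimately show ?thesis using j0 unfolding cj_def by simp
    qed
    have "relsum v c = relsum v (\<lambda>x. \<Sum>j\<in>{0..l}. cj j x)" using csum by presburger
    also have "\<dots> = (\<Sum>j\<in>{0..l}. relsum v (cj j))" by (rule relsum_sum)
    finally have s0: "(\<Sum>j\<in>{0..l}. relsum v (cj j)) = 0" using c by simp
    have inspan: "\<forall>j\<in>{0..l}. relsum v (cj j) \<in> vec.span (v ` I j)"
      by (intro ballI relsum_in_span) (simp add: cj_def)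
    have ind: "\<forall>w. (\<forall>j\<in>{0..l}. w j \<in> vec.span (v ` I j)) \<longrightarrow> (\<Sum>j\<in>{0..l}. w j) = 0 \<longrightarrow> (\<forall>j\<in>{0..l}. w j = 0)"
      using ds unfolding is_direct_sum_def by blast
    have r0: "\<forall>j\<in>{0..l}. relsum v (cj j) = 0"
      using ind[rule_format, of "\<lambda>j. relsum v (cj j)"] s0 inspan by blast
    have cI: "\<forall>x\<in>I j. c x = 0" if j: "j \<in> {0..l}" for j
    proof (cases "j = 0")
      case True
      have fd: "findep v (I 0)" using d0 findep_iff_dim by blast
      have sub: "{x. cj 0 x \<noteq> 0} \<subseteq> I 0" unfolding cj_def by auto
      have r00: "relsum v (cj 0) = 0" using r0 by simp
      have z: "\<forall>x. cj 0 x = 0" using findepD[OF fd r00 sub] by blast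
      show ?thesis
      proof
        fix x assume "x \<in> I j"
        then show "c x = 0" using z[rule_format, of x] True unfolding cj_def by simp
      qed
    next
      case False
      then have j1: "j \<in> {1..l}" using j by auto
      have "\<not> I j \<subseteq> S"
      proof
        assume "I j \<subseteq> S"
        moreover obtain a where "nnrel v a" "{i. a i \<noteq> 0} \<subseteq> I j"
          using och_nnrel[OF och[rule_format, OF j1] ne[rule_format, OF j1]] by blast
        ultimately show False using S unfolding acyc_def by blast
      qed
      then obtain i0 where i0: "i0 \<in> I j" "i0 \<notin> S" by blast
      have sp: "vec.span (v ` I j) = vec.span (v ` (I j - {i0}))"
        by (rule och_span[OF och[rule_format, OF j1] i0(1)])
      have "card (I j - {i0}) = card (I j) - 1" using i0 by simp
      moreover have "vec.dim (vec.span (v ` (I j - {i0}))) = vec.dim (vec.span (v ` I j))"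
        by (simp only: sp)
      moreover have "vec.dim (vec.span (v ` I j)) = card (I j) - 1" using dj j1 by blast
      ultimately have fd: "findep v (I j - {i0})" unfolding findep_iff_dim by simp
      have sub: "{x. cj j x \<noteq> 0} \<subseteq> I j - {i0}" unfolding cj_def using c i0 by auto
      have r00: "relsum v (cj j) = 0" using r0 j by simp
      have z: "\<forall>x. cj j x = 0" using findepD[OF fd r00 sub] by blast
      show ?thesis
      proof
        fix x assume "x \<in> I j"
        then show "c x = 0" using z[rule_format, of x] unfolding cj_def by simp
      qed
    qed
    obtain j where "j \<in> {0..l}" "i \<in> I j" using cover by blast
    then show "c i = 0" using cI by blast
  qed
qed


lemma power_int_sum:
  fixes x :: "'a::field"
  assumes "x \<noteq> 0"
  shows "(\<Prod>i\<in>A. x powi (e i)) = x powi (\<Sum>i\<in>A. e i)"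
  by (induction A rule: infinite_finite_induct) (auto simp: power_int_add assms)

lemma prod_power_int:
  fixes f :: "'i \<Rightarrow> 'a::field"
  shows "(\<Prod>i\<in>A. f i) powi m = (\<Prod>i\<in>A. f i powi m)"
  by (induction A rule: infinite_finite_induct) (auto simp: power_int_mult_distrib)

lemma pf_prod:
  assumes "finite A" "\<forall>i\<in>A. p i \<in> polyfun"
  shows "(\<lambda>v. \<Prod>i\<in>A. p i v) \<in> polyfun"
  using assms
proof (induction A rule: finite_induct)
  case empty then show ?case using polyfun.pf_const[of 1] by simp
next
  case (insert a A)
  then show ?case using polyfun.pf_mult[of "p a" "\<lambda>v. \<Prod>i\<in>A. p i v"] by simp
qed

lemma pf_power:
  assumes "p \<in> polyfun"
  shows "(\<lambda>v. p v ^ n) \<in> polyfun"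
proof (induction n)
  case 0 then show ?case using polyfun.pf_const[of 1] by simp
next
  case (Suc n)
  then show ?case using polyfun.pf_mult[OF assms Suc] by simp
qed

lemma common_denom:
  fixes f :: "'k \<Rightarrow> rat"
  assumes "finite K"
  shows "\<exists>D::int. D > 0 \<and> (\<forall>k\<in>K. \<exists>m::int. of_int D * f k = of_int m)"
  using assms
proof (induction K rule: finite_induct)
  case empty then show ?case by (intro exI[of _ 1]) auto
next
  case (insert k K)
  then obtain D where D: "D > 0" "\<forall>k\<in>K. \<exists>m::int. of_int D * f k = of_int m" by blast
  obtain n d where nd: "quotient_of (f k) = (n, d)" by (cases "quotient_of (f k)")
  have d: "d > 0" using quotient_of_denom_pos[OF nd] .
  have fk: "f k = of_int n / of_int d" using quotient_of_div[OF nd] .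
  have "\<forall>k'\<in>insert k K. \<exists>m::int. of_int (D * d) * f k' = of_int m"
  proof
    fix k' assume "k' \<in> insert k K"
    then show "\<exists>m::int. of_int (D * d) * f k' = of_int m"
    proof
      assume "k' = k"
      then have "of_int (D * d) * f k' = of_int (D * n)" using d fk by simp
      then show ?thesis by blast
    next
      assume "k' \<in> K"
      then obtain m where "of_int D * f k' = of_int m" using D by blast
      then have "of_int (D * d) * f k' = of_int (d * m)" by (simp add: algebra_simps)
      then show ?thesis by blast
    qed
  qed
  moreover have "D * d > 0" using D d by simp
  ultimately show ?case by blast
qed

lemma char_eval_one: "char_eval s (\<chi> k. 1) = 1"
  unfolding char_eval_def by simp

lemma tact_one: "tact s (\<chi> k. 1) x = x"
  unfolding tact_def by (simp add: char_eval_one vec_eq_iff)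

lemma one_torus: "(\<chi> k. 1) \<in> torus"
  unfolding torus_def by simp

lemma char_inv:
  fixes t :: "'a::field ^ 'r"
  assumes t: "t \<in> torus" and m: "\<forall>k. (\<Sum>i\<in>UNIV. m i * s i $ k) = 0"
  shows "(\<Prod>i\<in>UNIV. char_eval (s i) t powi m i) = 1"
proof -
  have tk: "t $ k \<noteq> 0" for k using t unfolding torus_def by blast
  have "(\<Prod>i\<in>UNIV. char_eval (s i) t powi m i) = (\<Prod>i\<in>UNIV. \<Prod>k\<in>UNIV. t $ k powi (s i $ k * m i))"
    unfolding char_eval_def by (simp add: prod_power_int power_int_mult)
  also have "\<dots> = (\<Prod>k\<in>UNIV. \<Prod>i\<in>UNIV. t $ k powi (s i $ k * m i))" by (rule prod.swap)
  also have "\<dots> = (\<Prod>k\<in>UNIV. t $ k powi (\<Sum>i\<in>UNIV. s i $ k * m i))"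
    by (simp add: power_int_sum tk)
  also have "\<dots> = 1" using m by (simp add: mult.commute)
  finally show ?thesis .
qed

lemma inv_fun:
  fixes t :: "'a::field ^ 'r" and y :: "'a ^ 'n::finite"
  assumes t: "t \<in> torus" and m: "\<forall>k. (\<Sum>i\<in>UNIV. m i * s i $ k) = 0"
  shows "(\<Prod>i\<in>UNIV. (tact s t y $ i) powi m i) = (\<Prod>i\<in>UNIV. (y $ i) powi m i)"
proof -
  have "(\<Prod>i\<in>UNIV. (tact s t y $ i) powi m i) =
        (\<Prod>i\<in>UNIV. char_eval (s i) t powi m i) * (\<Prod>i\<in>UNIV. (y $ i) powi m i)"
    unfolding tact_def by (simp add: power_int_mult_distrib prod.distrib)
  then show ?thesis using char_inv[OF t m] by simp
qed

lemma int_relation: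
  fixes s :: "'n::finite \<Rightarrow> int ^ 'r"
  assumes rel: "relsum (\<lambda>i. wt (s i)) c = 0" and D: "\<forall>i. of_int D * c i = of_int (m i)"
  shows "\<forall>k. (\<Sum>i\<in>UNIV. m i * s i $ k) = 0"
proof
  fix k
  have "(\<Sum>i\<in>UNIV. c i * of_int (s i $ k)) = 0"
    using arg_cong[OF rel, of "\<lambda>y. y $ k"] unfolding relsum_def wt_def by simp
  then have "of_int D * (\<Sum>i\<in>UNIV. c i * of_int (s i $ k)) = 0" by simp
  then have "(\<Sum>i\<in>UNIV. of_int (m i) * of_int (s i $ k)) = (0::rat)"
    unfolding sum_distrib_left using D by (simp add: mult.assoc[symmetric])
  then have "(of_int (\<Sum>i\<in>UNIV. m i * s i $ k) :: rat) = 0" by simp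
  then show "(\<Sum>i\<in>UNIV. m i * s i $ k) = 0" by (simp only: of_int_eq_0_iff)
qed


lemma nilp_acyc:
  fixes s :: "'n::finite \<Rightarrow> int ^ 'r::finite" and x :: "'a::field ^ 'n"
  assumes nil: "nilpotent_vec s x"
  shows "acyc (\<lambda>i. wt (s i)) {i. x $ i \<noteq> 0}"
proof (rule ccontr)
  assume "\<not> acyc (\<lambda>i. wt (s i)) {i. x $ i \<noteq> 0}"
  then obtain c where c: "nnrel (\<lambda>i. wt (s i)) c" "{i. c i \<noteq> 0} \<subseteq> {i. x $ i \<noteq> 0}"
    unfolding acyc_def by blast
  have cnn: "\<forall>i. 0 \<le> c i" and crel: "relsum (\<lambda>i. wt (s i)) c = 0" and cnz: "\<exists>i. c i \<noteq> 0"
    using c(1) unfolding nnrel_def by blast+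
  obtain D where D: "D > 0" "\<forall>i\<in>UNIV. \<exists>m::int. of_int D * c i = of_int m"
    using common_denom[of UNIV c] by auto
  from bchoice[OF D(2)] obtain m where m: "\<forall>i\<in>UNIV. of_int D * c i = of_int (m i)" ..
  have m': "\<forall>i. of_int D * c i = of_int (m i)" using m by simp
  have mrel: "\<forall>k. (\<Sum>i\<in>UNIV. m i * s i $ k) = 0" by (rule int_relation[OF crel m'])
  have mnn: "m i \<ge> 0" for i
  proof -
    have "(0::rat) \<le> of_int D * c i" using D cnn by simp
    then show ?thesis using m' by simp
  qed
  have mnz: "m i \<noteq> 0 \<longleftrightarrow> c i \<noteq> 0" for i
  proof -
    have "(of_int (m i) :: rat) = of_int D * c i" using m' by simp
    then show ?thesis using D by auto
  qed
  obtain i1 where i1: "c i1 \<noteq> 0" using cnz by blast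
  define f where "f y = (\<Prod>i\<in>UNIV. (y $ i) ^ nat (m i))" for y :: "'a ^ 'n"
  have f_powi: "f y = (\<Prod>i\<in>UNIV. (y $ i) powi m i)" for y
    unfolding f_def using mnn by (intro prod.cong refl) (simp add: power_int_nonneg_exp)
  have pf: "(\<lambda>y. f y + (- f x)) \<in> polyfun"
  proof (rule polyfun.pf_add)
    show "f \<in> polyfun" unfolding f_def
      by (intro pf_prod ballI pf_power polyfun.pf_coord) auto
    show "(\<lambda>y. - f x) \<in> polyfun" by (rule polyfun.pf_const)
  qed
  have van: "\<forall>z\<in>orbit s x. f z + - f x = 0"
  proof
    fix z assume "z \<in> orbit s x"
    then obtain t where t: "t \<in> torus" "z = tact s t x" unfolding orbit_def by blast
    show "f z + - f x = 0" unfolding f_powi t(2) inv_fun[OF t(1) mrel] by simp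
  qed
  have "0 \<in> zariski_closure (orbit s x)" using nil unfolding nilpotent_vec_def .
  then have zc: "\<forall>p\<in>polyfun. (\<forall>z\<in>orbit s x. p z = 0) \<longrightarrow> p 0 = 0"
    unfolding zariski_closure_def by simp
  have "(\<lambda>y. f y + - f x) 0 = 0"
    by (rule zc[rule_format, OF pf]) (use van in simp)
  then have "f 0 + - f x = 0" by simp
  moreover have "f 0 = 0"
  proof -
    have "m i1 \<noteq> 0" using mnz i1 by simp
    then have "nat (m i1) > 0" using mnn[of i1] by simp
    then have "(0::'a) ^ nat (m i1) = 0" by simp
    then show ?thesis unfolding f_def by (intro prod_zero) (auto intro!: bexI[of _ i1])
  qed
  moreover have "f x \<noteq> 0"
  proof -
    have "(x $ i) ^ nat (m i) \<noteq> 0" for i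
    proof (cases "m i = 0")
      case True then show ?thesis by simp
    next
      case False
      then have "x $ i \<noteq> 0" using mnz c(2) by blast
      then show ?thesis by simp
    qed
    then show ?thesis unfolding f_def by (simp add: prod_zero_iff)
  qed
  ultimately show False by simp
qed

lemma poly_of_pf:
  fixes x :: "'a::field ^ 'n"
  assumes "p \<in> polyfun"
  shows "\<exists>q. \<forall>z. p (\<chi> i. z ^ (e i) * x $ i) = poly q z"
  using assms
proof (induction rule: polyfun.induct)
  case (pf_const c)
  then show ?case by (intro exI[of _ "[:c:]"]) simp
next
  case (pf_coord i)
  then show ?case by (intro exI[of _ "monom (x $ i) (e i)"]) (simp add: poly_monom mult.commute)
next
  case (pf_add p q)
  then obtain a b where "\<forall>z. p (\<chi> i. z ^ (e i) * x $ i) = poly a z" "\<forall>z. q (\<chi> i. z ^ (e i) * x $ i) = poly b z"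
    by blast
  then show ?case by (intro exI[of _ "a + b"]) simp
next
  case (pf_mult p q)
  then obtain a b where "\<forall>z. p (\<chi> i. z ^ (e i) * x $ i) = poly a z" "\<forall>z. q (\<chi> i. z ^ (e i) * x $ i) = poly b z"
    by blast
  then show ?case by (intro exI[of _ "a * b"]) simp
qed

lemma pos_nilp:
  fixes x :: "'a::field_char_0 ^ 'n::finite" and s :: "'n \<Rightarrow> int ^ 'r::finite"
  assumes l: "\<forall>i. x $ i \<noteq> 0 \<longrightarrow> 0 < (\<Sum>k\<in>UNIV. l $ k * s i $ k)"
  shows "nilpotent_vec s x"
  unfolding nilpotent_vec_def zariski_closure_def
proof (intro CollectI ballI impI)
  fix p assume p: "p \<in> polyfun" "\<forall>z\<in>orbit s x. p z = 0"
  define e where "e i = nat (\<Sum>k\<in>UNIV. l $ k * s i $ k)" for i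
  obtain q where q: "\<forall>z. p (\<chi> i. z ^ (e i) * x $ i) = poly q z" using poly_of_pf[OF p(1)] by blast
  have qz: "poly q z = 0" if z: "z \<noteq> 0" for z
  proof -
    define lam where "lam = (\<chi> k. z powi (l $ k))"
    have lt: "lam \<in> torus" unfolding torus_def lam_def using z by simp
    have "tact s lam x = (\<chi> i. z ^ (e i) * x $ i)"
    proof -
      have "char_eval (s i) lam * x $ i = z ^ (e i) * x $ i" for i
      proof (cases "x $ i = 0")
        case True then show ?thesis by simp
      next
        case False
        have "char_eval (s i) lam = (\<Prod>k\<in>UNIV. z powi (l $ k * s i $ k))"
          unfolding char_eval_def lam_def by (simp add: power_int_mult)
        also have "\<dots> = z powi (\<Sum>k\<in>UNIV. l $ k * s i $ k)" by (rule power_int_sum[OF z])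
        also have "\<dots> = z ^ (e i)" unfolding e_def using l False
          by (simp add: power_int_nonneg_exp less_imp_le)
        finally show ?thesis by simp
      qed
      then show ?thesis unfolding tact_def by (simp add: vec_eq_iff)
    qed
    then have "(\<chi> i. z ^ (e i) * x $ i) \<in> orbit s x" unfolding orbit_def using lt by force
    then have "p (\<chi> i. z ^ (e i) * x $ i) = 0" using p(2) by blast
    then show ?thesis using q[rule_format, of z] by simp
  qed
  have "q = 0"
  proof (rule ccontr)
    assume "q \<noteq> 0"
    then have "finite {z. poly q z = 0}" by (rule poly_roots_finite)
    moreover have "UNIV \<subseteq> insert 0 {z. poly q z = 0}" using qz by auto
    ultimately have "finite (UNIV :: 'a set)" using finite_subset by blast
    then show False using infinite_UNIV_char_0 by blast
  qed
  have "(\<chi> i. (0::'a) ^ (e i) * x $ i) = 0"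
  proof -
    have "(0::'a) ^ (e i) * x $ i = 0" for i
    proof (cases "x $ i = 0")
      case True then show ?thesis by simp
    next
      case False
      then have "e i > 0" unfolding e_def using l by simp
      then show ?thesis by simp
    qed
    then show ?thesis by (simp add: vec_eq_iff)
  qed
  moreover have "p (\<chi> i. (0::'a) ^ (e i) * x $ i) = poly q 0" using q by blast
  ultimately show "p 0 = 0" using \<open>q = 0\<close> by simp
qed


lemma findep_imp:
  fixes v :: "'n::finite \<Rightarrow> rat^'r"
  assumes "findep v A"
  shows "inj_on v A" "vec.independent (v ` A)"
proof -
  have D: "vec.dim (vec.span (v ` A)) = card A" using assms findep_iff_dim by blast
  have "vec.dim (vec.span (v ` A)) \<le> card (v ` A)"
    by (rule vec.dim_le_card) auto
  moreover have "card (v ` A) \<le> card A" by (rule card_image_le) auto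
  ultimately have cA: "card (v ` A) = card A" using D by simp
  then show "inj_on v A" by (intro eq_card_imp_inj_on) auto
  have "vec.independent (v ` A) \<longleftrightarrow> vec.span (v ` A) \<subseteq> vec.span (v ` A)"
  proof (rule vec.card_eq_dim)
    show "v ` A \<subseteq> vec.span (v ` A)" by (rule vec.span_superset)
    show "card (v ` A) = vec.dim (vec.span (v ` A))" using D cA by simp
  qed auto
  then show "vec.independent (v ` A)" by simp
qed

lemma dual_vec:
  fixes s :: "'n::finite \<Rightarrow> int^'r::finite"
  assumes F: "findep (\<lambda>i. wt (s i)) S" and j: "j \<in> S"
  shows "\<exists>\<mu>::int^'r. \<exists>d::int. d > 0 \<and> (\<forall>i\<in>S. (\<Sum>k\<in>UNIV. \<mu> $ k * s i $ k) = (if i = j then d else 0))"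
proof -
  define v where "v i = wt (s i)" for i
  have inj: "inj_on v S" and indep: "vec.independent (v ` S)"
    using findep_imp[OF F] unfolding v_def by auto
  define B where "B = vec.extend_basis (v ` S)"
  have B: "v ` S \<subseteq> B" "vec.independent B" "vec.span B = UNIV"
    unfolding B_def using vec.extend_basis_superset[OF indep] vec.independent_extend_basis[OF indep]
      vec.span_extend_basis[OF indep] by auto
  define R where "R y = vec.representation B y (v j)" for y
  have Rb: "R (v i) = (if i = j then 1 else 0)" if i: "i \<in> S" for i
  proof -
    have "v i \<in> B" using B(1) i by blast
    then have "R (v i) = (if v j = v i then 1 else 0)"
      unfolding R_def using vec.representation_basis[OF B(2)] by simp
    moreover have "v j = v i \<longleftrightarrow> i = j" using inj i j unfolding inj_on_def by blast
    ultimately show ?thesis by simp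
  qed
  define \<nu> where "\<nu> = (\<chi> k. R (axis k 1))"
  have Rdot: "R y = dotq \<nu> y" for y
  proof -
    have "R y = R (\<Sum>k\<in>UNIV. (y $ k) *s axis k 1)" by (simp only: basis_expansion)
    also have "\<dots> = (\<Sum>k\<in>UNIV. vec.representation B ((y $ k) *s axis k 1) (v j))"
      unfolding R_def using vec.representation_sum[OF B(2), of UNIV "\<lambda>k. (y $ k) *s axis k 1"] B(3)
      by simp
    also have "\<dots> = (\<Sum>k\<in>UNIV. y $ k * R (axis k 1))"
      unfolding R_def using vec.representation_scale[OF B(2)] B(3) by simp
    also have "\<dots> = dotq \<nu> y" unfolding dotq_def \<nu>_def by (simp add: mult.commute)
    finally show ?thesis .
  qed
  obtain D where D: "D > 0" "\<forall>k\<in>UNIV. \<exists>m::int. of_int D * \<nu> $ k = of_int m"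
    using common_denom[of UNIV "\<lambda>k. \<nu> $ k"] by auto
  from bchoice[OF D(2)] obtain m where m: "\<forall>k\<in>UNIV. of_int D * \<nu> $ k = of_int (m k)" ..
  define \<mu> where "\<mu> = (\<chi> k. m k)"
  have "(\<Sum>k\<in>UNIV. \<mu> $ k * s i $ k) = (if i = j then D else 0)" if i: "i \<in> S" for i
  proof -
    have "(of_int (\<Sum>k\<in>UNIV. \<mu> $ k * s i $ k) :: rat) = (\<Sum>k\<in>UNIV. of_int (m k) * of_int (s i $ k))"
      unfolding \<mu>_def by simp
    also have "\<dots> = (\<Sum>k\<in>UNIV. of_int D * (\<nu> $ k * of_int (s i $ k)))"
    proof (rule sum.cong[OF refl])
      fix k :: 'r
      have mk: "of_int D * \<nu> $ k = of_int (m k)" using m by simp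
      show "of_int (m k) * of_int (s i $ k) = of_int D * (\<nu> $ k * of_int (s i $ k))"
        by (simp only: mult.assoc[symmetric] mk)
    qed
    also have "\<dots> = of_int D * dotq \<nu> (v i)"
      unfolding dotq_def v_def wt_def by (simp add: sum_distrib_left)
    also have "\<dots> = of_int D * R (v i)" using Rdot by simp
    also have "\<dots> = of_int (if i = j then D else 0)" using Rb[OF i] by simp
    finally show ?thesis by (simp only: of_int_eq_iff)
  qed
  then show ?thesis using D(1) by blast
qed

lemma transitive:
  fixes s :: "'n::finite \<Rightarrow> int^'r::finite" and x y :: "'a::alg_closed_field ^ 'n"
  assumes F: "findep (\<lambda>i. wt (s i)) S" and sx: "{i. x $ i \<noteq> 0} = S" and sy: "{i. y $ i \<noteq> 0} = S"
  shows "\<exists>t\<in>torus. y = tact s t x"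
proof -
  have "\<forall>j\<in>S. \<exists>p::(int^'r) \<times> int. snd p > 0 \<and> (\<forall>i\<in>S. (\<Sum>k\<in>UNIV. fst p $ k * s i $ k) = (if i = j then snd p else 0))"
    using dual_vec[OF F] by fastforce
  from bchoice[OF this] obtain p where p:
    "\<forall>j\<in>S. snd (p j) > 0 \<and> (\<forall>i\<in>S. (\<Sum>k\<in>UNIV. fst (p j) $ k * s i $ k) = (if i = j then snd (p j) else 0))" ..
  define \<mu> where "\<mu> j = fst (p j)" for j
  define d where "d j = snd (p j)" for j
  have dpos: "d j > 0" if "j \<in> S" for j using p that unfolding d_def by blast
  have dual: "(\<Sum>k\<in>UNIV. \<mu> j $ k * s i $ k) = (if i = j then d j else 0)" if "j \<in> S" "i \<in> S" for i j
    using p that unfolding d_def \<mu>_def by blast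
  have "\<forall>j\<in>S. \<exists>z. z ^ nat (d j) = y $ j / x $ j"
  proof
    fix j assume j: "j \<in> S"
    have "nat (d j) > 0" using dpos[OF j] by simp
    then show "\<exists>z. z ^ nat (d j) = y $ j / x $ j" by (rule nth_root_exists)
  qed
  from bchoice[OF this] obtain z where z: "\<forall>j\<in>S. z j ^ nat (d j) = y $ j / x $ j" ..
  have xS: "x $ j \<noteq> 0 \<longleftrightarrow> j \<in> S" for j using sx by (simp add: set_eq_iff)
  have yS: "y $ j \<noteq> 0 \<longleftrightarrow> j \<in> S" for j using sy by (simp add: set_eq_iff)
  have znz: "z j \<noteq> 0" if j: "j \<in> S" for j
  proof
    assume "z j = 0"
    then have "z j ^ nat (d j) = 0" using dpos[OF j] by simp
    moreover have "y $ j / x $ j \<noteq> 0" using xS[of j] yS[of j] j by simp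
    moreover have "z j ^ nat (d j) = y $ j / x $ j" using z j by blast
    ultimately show False by simp
  qed
  define t where "t = (\<chi> k. \<Prod>j\<in>S. z j powi (\<mu> j $ k))"
  have tt: "t \<in> torus" unfolding torus_def t_def using znz by (simp add: prod_zero_iff)
  have ch: "char_eval (s i) t = y $ i / x $ i" if i: "i \<in> S" for i
  proof -
    have "char_eval (s i) t = (\<Prod>k\<in>UNIV. \<Prod>j\<in>S. z j powi (\<mu> j $ k * s i $ k))"
      unfolding char_eval_def t_def by (simp add: prod_power_int power_int_mult)
    also have "\<dots> = (\<Prod>j\<in>S. \<Prod>k\<in>UNIV. z j powi (\<mu> j $ k * s i $ k))" by (rule prod.swap)
    also have "\<dots> = (\<Prod>j\<in>S. z j powi (\<Sum>k\<in>UNIV. \<mu> j $ k * s i $ k))"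
      by (intro prod.cong refl power_int_sum znz) 
    also have "\<dots> = (\<Prod>j\<in>S. z j powi (if i = j then d j else 0))"
      by (intro prod.cong refl) (simp add: dual i)
    also have "\<dots> = (\<Prod>j\<in>S. if i = j then z j powi d j else 1)"
      by (intro prod.cong refl) simp
    also have "\<dots> = z i powi d i" using i by (simp add: prod.delta)
    also have "\<dots> = z i ^ nat (d i)" using dpos[OF i] by (simp add: power_int_nonneg_exp)
    also have "\<dots> = y $ i / x $ i" using z i by blast
    finally show ?thesis .
  qed
  have "y = tact s t x"
  proof -
    have "y $ i = char_eval (s i) t * x $ i" for i
    proof (cases "i \<in> S")
      case True
      have "x $ i \<noteq> 0" using xS True by simp
      then show ?thesis using ch[OF True] by simp
    next
      case False
      then have "x $ i = 0" "y $ i = 0" using xS yS by auto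
      then show ?thesis by simp
    qed
    then show ?thesis unfolding tact_def by (simp add: vec_eq_iff)
  qed
  then show ?thesis using tt by blast
qed

lemma tact_mult:
  fixes t t0 :: "'a::field ^ 'r::finite"
  shows "tact s t (tact s t0 x) = tact s (\<chi> k. t $ k * t0 $ k) x"
proof -
  have "char_eval a (\<chi> k. t $ k * t0 $ k) = char_eval a t * char_eval a t0" for a
    unfolding char_eval_def by (simp add: power_int_mult_distrib prod.distrib)
  then show ?thesis unfolding tact_def by (simp add: vec_eq_iff mult.assoc)
qed

lemma orbit_tact:
  fixes t0 :: "'a::field ^ 'r::finite"
  assumes t0: "t0 \<in> torus"
  shows "orbit s (tact s t0 x) = orbit s x"
proof
  show "orbit s (tact s t0 x) \<subseteq> orbit s x"
  proof
    fix z assume "z \<in> orbit s (tact s t0 x)"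
    then obtain t where t: "t \<in> torus" "z = tact s t (tact s t0 x)" unfolding orbit_def by blast
    have "(\<chi> k. t $ k * t0 $ k) \<in> torus" using t t0 unfolding torus_def by simp
    then show "z \<in> orbit s x" unfolding orbit_def t(2) tact_mult by blast
  qed
  show "orbit s x \<subseteq> orbit s (tact s t0 x)"
  proof
    fix z assume "z \<in> orbit s x"
    then obtain t where t: "t \<in> torus" "z = tact s t x" unfolding orbit_def by blast
    define t' where "t' = (\<chi> k. t $ k / t0 $ k)"
    have t't: "t' \<in> torus" using t t0 unfolding torus_def t'_def by simp
    have "(\<chi> k. t' $ k * t0 $ k) = t" using t0 unfolding t'_def torus_def by (simp add: vec_eq_iff)
    then have "z = tact s t' (tact s t0 x)" unfolding tact_mult t(2) by simp
    then show "z \<in> orbit s (tact s t0 x)" unfolding orbit_def using t't by blast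
  qed
qed


lemma powi_surj:
  fixes w :: "'a::alg_closed_field"
  assumes m: "m \<noteq> 0" and w: "w \<noteq> 0"
  shows "\<exists>u. u \<noteq> 0 \<and> u powi m = w"
proof (cases "m > 0")
  case True
  then have "nat m > 0" by simp
  then obtain u where u: "u ^ nat m = w" using nth_root_exists by blast
  then have "u \<noteq> 0" using w True by (metis power_0_left zero_less_nat_eq order_less_irrefl)
  moreover have "u powi m = w" using u True by (simp add: power_int_nonneg_exp)
  ultimately show ?thesis by blast
next
  case False
  then have mneg: "m < 0" using m by simp
  then have "nat (- m) > 0" by simp
  then obtain u where u: "u ^ nat (- m) = inverse w" using nth_root_exists by blast
  have "u \<noteq> 0"
  proof
    assume "u = 0"
    then have "u ^ nat (- m) = 0" using \<open>nat (- m) > 0\<close> by simp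
    then show False using u w by simp
  qed
  moreover have "u powi m = w"
  proof -
    have "u powi m = inverse (u powi (- m))" by (simp add: power_int_minus)
    also have "u powi (- m) = u ^ nat (- m)" using mneg by (simp add: power_int_nonneg_exp)
    finally show ?thesis using u by simp
  qed
  ultimately show ?thesis by blast
qed

lemma visible_P:
  fixes s :: "'n::finite \<Rightarrow> int^'r::finite"
  assumes vis: "visible TYPE('a::{alg_closed_field, field_char_0}) s"
  shows "\<forall>S. acyc (\<lambda>i. wt (s i)) S \<longrightarrow> findep (\<lambda>i. wt (s i)) S"
proof (intro allI impI)
  fix S assume S: "acyc (\<lambda>i. wt (s i)) S"
  show "findep (\<lambda>i. wt (s i)) S"
  proof (rule ccontr)
    assume "\<not> findep (\<lambda>i. wt (s i)) S"
    then obtain c i1 where c: "relsum (\<lambda>i. wt (s i)) c = 0" "{i. c i \<noteq> 0} \<subseteq> S" "c i1 \<noteq> 0"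
      unfolding findep_def by blast
    have i1S: "i1 \<in> S" using c by blast
    obtain lam where lam: "\<forall>i\<in>S. 0 < dotq lam (wt (s i))" using gordan_acyc[OF S] by blast
    obtain D1 where D1: "D1 > 0" "\<forall>k\<in>UNIV. \<exists>m::int. of_int D1 * lam $ k = of_int m"
      using common_denom[of UNIV "\<lambda>k. lam $ k"] by auto
    from bchoice[OF D1(2)] obtain lk where lk: "\<forall>k\<in>UNIV. of_int D1 * lam $ k = of_int (lk k)" ..
    define lv where "lv = (\<chi> k. lk k)"
    have lvpos: "0 < (\<Sum>k\<in>UNIV. lv $ k * s i $ k)" if i: "i \<in> S" for i
    proof -
      have "(of_int (\<Sum>k\<in>UNIV. lv $ k * s i $ k) :: rat) = (\<Sum>k\<in>UNIV. of_int (lk k) * of_int (s i $ k))"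
        unfolding lv_def by simp
      also have "\<dots> = (\<Sum>k\<in>UNIV. of_int D1 * (lam $ k * of_int (s i $ k)))"
      proof (rule sum.cong[OF refl])
        fix k :: 'r
        have mk: "of_int D1 * lam $ k = of_int (lk k)" using lk by simp
        show "of_int (lk k) * of_int (s i $ k) = of_int D1 * (lam $ k * of_int (s i $ k))"
          by (simp only: mult.assoc[symmetric] mk)
      qed
      also have "\<dots> = of_int D1 * dotq lam (wt (s i))"
        unfolding dotq_def wt_def by (simp add: sum_distrib_left)
      finally have eq: "(of_int (\<Sum>k\<in>UNIV. lv $ k * s i $ k) :: rat) = of_int D1 * dotq lam (wt (s i))" .
      have "(0::rat) < of_int (\<Sum>k\<in>UNIV. lv $ k * s i $ k)"
        by (subst eq) (use D1(1) lam i in simp)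
      then show ?thesis by (simp only: of_int_0_less_iff)
    qed
    obtain D2 where D2: "D2 > 0" "\<forall>i\<in>UNIV. \<exists>m::int. of_int D2 * c i = of_int m"
      using common_denom[of UNIV c] by auto
    from bchoice[OF D2(2)] obtain m where m0: "\<forall>i\<in>UNIV. of_int D2 * c i = of_int (m i)" ..
    have m: "\<forall>i. of_int D2 * c i = of_int (m i)" using m0 by simp
    have mrel: "\<forall>k. (\<Sum>i\<in>UNIV. m i * s i $ k) = 0" by (rule int_relation[OF c(1) m])
    have mz: "m i = 0 \<longleftrightarrow> c i = 0" for i
    proof -
      have "(of_int (m i) :: rat) = of_int D2 * c i" using m by simp
      then show ?thesis using D2(1) by auto
    qed
    have m1: "m i1 \<noteq> 0" using mz c(3) by simp
    have mS: "m i = 0" if "i \<notin> S" for i using c(2) that mz by blast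
    define xu where "xu u = (\<chi> i. if i = i1 then u else if i \<in> S then 1 else (0::'a))" for u
    define h where "h y = (\<Prod>i\<in>UNIV. (y $ i) powi m i)" for y :: "'a ^ 'n"
    have nil: "nilpotent_vec s (xu u)" if "u \<noteq> 0" for u
    proof (rule pos_nilp[where l = lv])
      show "\<forall>i. xu u $ i \<noteq> 0 \<longrightarrow> 0 < (\<Sum>k\<in>UNIV. lv $ k * s i $ k)"
      proof (intro allI impI)
        fix i assume "xu u $ i \<noteq> 0"
        then have "i \<in> S" using i1S unfolding xu_def by (auto split: if_splits)
        then show "0 < (\<Sum>k\<in>UNIV. lv $ k * s i $ k)" by (rule lvpos)
      qed
    qed
    have hinv: "h z = h y" if zo: "z \<in> orbit s y" for z y
    proof -
      obtain t where t: "t \<in> torus" "z = tact s t y" using zo unfolding orbit_def by blast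
      show ?thesis unfolding h_def t(2) by (rule inv_fun[OF t(1) mrel])
    qed
    have hx: "h (xu u) = u powi m i1" for u
    proof -
      have "h (xu u) = (xu u $ i1) powi m i1 * (\<Prod>i\<in>UNIV - {i1}. (xu u $ i) powi m i)"
        unfolding h_def by (simp add: prod.remove)
      moreover have "(\<Prod>i\<in>UNIV - {i1}. (xu u $ i) powi m i) = 1"
      proof (rule prod.neutral, rule ballI)
        fix i assume i: "i \<in> UNIV - {i1}"
        show "(xu u $ i) powi m i = 1"
        proof (cases "i \<in> S")
          case True then show ?thesis using i unfolding xu_def by simp
        next
          case False then show ?thesis using mS[OF False] by simp
        qed
      qed
      ultimately show ?thesis unfolding xu_def by simp
    qed
    define Orb where "Orb = {orbit s x | x. nilpotent_vec s (x :: 'a ^ 'n)}"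
    have finO: "finite Orb" using vis unfolding visible_def Orb_def by simp
    have fin1: "finite (\<Union>((\<lambda>A. h ` A) ` Orb))"
    proof (rule finite_Union)
      show "finite ((\<lambda>A. h ` A) ` Orb)" using finO by simp
      show "finite B" if Bin: "B \<in> (\<lambda>A. h ` A) ` Orb" for B
      proof -
        obtain y where y: "B = h ` orbit s y" using Bin unfolding Orb_def by blast
        have "B \<subseteq> {h y}" unfolding y using hinv by blast
        then show ?thesis using finite_subset by blast
      qed
    qed
    have sub: "UNIV - {0} \<subseteq> \<Union>((\<lambda>A. h ` A) ` Orb)"
    proof
      fix w :: 'a assume "w \<in> UNIV - {0}"
      then obtain u where u: "u \<noteq> 0" "u powi m i1 = w" using powi_surj[OF m1] by blast
      have "orbit s (xu u) \<in> Orb" unfolding Orb_def using nil[OF u(1)] by blast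
      moreover have "xu u \<in> orbit s (xu u)"
        unfolding orbit_def using tact_one[of s "xu u"] one_torus by (metis image_eqI)
      ultimately have "h (xu u) \<in> \<Union>((\<lambda>A. h ` A) ` Orb)" by blast
      then show "w \<in> \<Union>((\<lambda>A. h ` A) ` Orb)" using hx u by simp
    qed
    have "finite (UNIV - {0::'a})" using finite_subset[OF sub fin1] .
    then have "finite (UNIV :: 'a set)" by simp
    then show False using infinite_UNIV_char_0 by blast
  qed
qed


theorem proposition3p5:
  fixes s :: "'n::finite \<Rightarrow> int ^ 'r::finite"
  shows "visible TYPE('a::{alg_closed_field, field_char_0}) s \<longleftrightarrow>
    (\<exists>(l::nat) (I :: nat \<Rightarrow> 'n set).
       (\<Union>j\<in>{0..l}. I j) = UNIV \<and>
       (\<forall>j\<in>{0..l}. \<forall>k\<in>{0..l}. j \<noteq> k \<longrightarrow> I j \<inter> I k = {}) \<and>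
       (\<forall>j\<in>{1..l}. I j \<noteq> {}) \<and>
       is_direct_sum (vec.span (wt ` s ` UNIV)) {0..l} (\<lambda>j. vec.span (wt ` s ` I j)) \<and>
       vec.dim (vec.span (wt ` s ` I 0)) = card (I 0) \<and>
       (\<forall>j\<in>{1..l}. vec.dim (vec.span (wt ` s ` I j)) = card (I j) - 1) \<and>
       (\<forall>j\<in>{1..l}. 0 \<in> open_convex_hull (wt ` s ` I j)))"
proof -
  have img: "wt ` s ` A = (\<lambda>i. wt (s i)) ` A" for A by (simp add: image_image)
  show ?thesis
    unfolding img
  proof
    assume vis: "visible TYPE('a) s"
    show "\<exists>(l::nat) (I :: nat \<Rightarrow> 'n set).
       (\<Union>j\<in>{0..l}. I j) = UNIV \<and>
       (\<forall>j\<in>{0..l}. \<forall>k\<in>{0..l}. j \<noteq> k \<longrightarrow> I j \<inter> I k = {}) \<and>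
       (\<forall>j\<in>{1..l}. I j \<noteq> {}) \<and>
       is_direct_sum (vec.span ((\<lambda>i. wt (s i)) ` UNIV)) {0..l} (\<lambda>j. vec.span ((\<lambda>i. wt (s i)) ` I j)) \<and>
       vec.dim (vec.span ((\<lambda>i. wt (s i)) ` I 0)) = card (I 0) \<and>
       (\<forall>j\<in>{1..l}. vec.dim (vec.span ((\<lambda>i. wt (s i)) ` I j)) = card (I j) - 1) \<and>
       (\<forall>j\<in>{1..l}. 0 \<in> open_convex_hull ((\<lambda>i. wt (s i)) ` I j))"
      by (rule partition_exists[OF visible_P[OF vis]])
  next
    assume "\<exists>(l::nat) (I :: nat \<Rightarrow> 'n set).
       (\<Union>j\<in>{0..l}. I j) = UNIV \<and>
       (\<forall>j\<in>{0..l}. \<forall>k\<in>{0..l}. j \<noteq> k \<longrightarrow> I j \<inter> I k = {}) \<and>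
       (\<forall>j\<in>{1..l}. I j \<noteq> {}) \<and>
       is_direct_sum (vec.span ((\<lambda>i. wt (s i)) ` UNIV)) {0..l} (\<lambda>j. vec.span ((\<lambda>i. wt (s i)) ` I j)) \<and>
       vec.dim (vec.span ((\<lambda>i. wt (s i)) ` I 0)) = card (I 0) \<and>
       (\<forall>j\<in>{1..l}. vec.dim (vec.span ((\<lambda>i. wt (s i)) ` I j)) = card (I j) - 1) \<and>
       (\<forall>j\<in>{1..l}. 0 \<in> open_convex_hull ((\<lambda>i. wt (s i)) ` I j))"
    then obtain l and I :: "nat \<Rightarrow> 'n set" where
      H: "(\<Union>j\<in>{0..l}. I j) = UNIV"
       "\<forall>j\<in>{0..l}. \<forall>k\<in>{0..l}. j \<noteq> k \<longrightarrow> I j \<inter> I k = {}"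
       "\<forall>j\<in>{1..l}. I j \<noteq> {}"
       "is_direct_sum (vec.span ((\<lambda>i. wt (s i)) ` UNIV)) {0..l} (\<lambda>j. vec.span ((\<lambda>i. wt (s i)) ` I j))"
       "vec.dim (vec.span ((\<lambda>i. wt (s i)) ` I 0)) = card (I 0)"
       "\<forall>j\<in>{1..l}. vec.dim (vec.span ((\<lambda>i. wt (s i)) ` I j)) = card (I j) - 1"
       "\<forall>j\<in>{1..l}. 0 \<in> open_convex_hull ((\<lambda>i. wt (s i)) ` I j)"
      by blast
    have P: "\<forall>S. acyc (\<lambda>i. wt (s i)) S \<longrightarrow> findep (\<lambda>i. wt (s i)) S"
      by (rule partition_P[OF H(1) H(2) H(3) H(4) H(5) H(6) H(7)])
    define ind where "ind A = (\<chi> i. if i \<in> A then (1::'a) else 0)" for A :: "'n set"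
    have "{orbit s x | x. nilpotent_vec s (x :: 'a ^ 'n)} \<subseteq> (\<lambda>A. orbit s (ind A)) ` UNIV"
    proof
      fix O' assume "O' \<in> {orbit s x | x. nilpotent_vec s (x :: 'a ^ 'n)}"
      then obtain x :: "'a ^ 'n" where x: "O' = orbit s x" "nilpotent_vec s x" by blast
      define A where "A = {i. x $ i \<noteq> 0}"
      have "acyc (\<lambda>i. wt (s i)) A" unfolding A_def by (rule nilp_acyc[OF x(2)])
      then have F: "findep (\<lambda>i. wt (s i)) A" using P by blast
      have sA: "{i. ind A $ i \<noteq> 0} = A" unfolding ind_def by auto
      obtain t where t: "t \<in> torus" "x = tact s t (ind A)"
        using transitive[OF F sA, of x] A_def by blast
      have "O' = orbit s (ind A)" unfolding x(1) t(2) by (rule orbit_tact[OF t(1)])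
      then show "O' \<in> (\<lambda>A. orbit s (ind A)) ` UNIV" by blast
    qed
    moreover have "finite ((\<lambda>A. orbit s (ind A)) ` (UNIV :: 'n set set))" by simp
    ultimately show "visible TYPE('a) s" unfolding visible_def using finite_subset by blast
  qed
qed


end
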